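(* Let $H=\Bbbk^G{}^\tau\#_\sigma\Bbbk F$ be as in the context and fix $f\in F$. (1) The map $\Bbbk^{G_f}_{\tau_f}\to H'_f$, $p_g\mapsto p_g\#f$ ($g\in G_f$), is a coalgebra isomorphism onto the subcoalgebra $\mathrm{span}\{p_g\#f\mid g\in G_f\}$ of $H'_f$. (2) If $(V,\rho)$ is a right $\Bbbk^{G_f}_{\tau_f}$-comodule with $\rho(v)=\sum_{g\in G_f}v_g\otimes p_g$, then $V\otimes\Bbbk f$ is a right $H'_f$-comodule via $\rho'(v\otimes f)=\sum_{g\in G_f}v_g\otimes f\otimes p_g\#f$. (3) The cotensor product $\tilde V=(V\otimes\Bbbk f)\Box_{H'_f}H$ is a right $H$-comodule with coaction $\mathrm{id}\otimes\Delta$, and $\tilde V=\bigoplus_{z\in T_f}V\otimes\Bbbk f\otimes z$ as vector spaces, where for $v\in V$, $z\in T_f$ the symbol $v\otimes f\otimes z$ denotes the element $\sum_{g\in G_f}\tau(gz,z^{-1};f)\,v_g\otimes f\otimes p_{gz}\#(z^{-1}\triangleright f)\in\tilde V$ (the map $v\mapsto v\otimes f\otimes z$ being injective and linear). Writing each $x\in G$ uniquely as $x=g_xz_x$ with $g_x\in G_f$, $z_x\in T_f$, the coaction is $$\tilde\rho(v\otimes f\otimes z)=\sum_{x\in G}\tau(z_x^{-1},g_x^{-1};f)^{-1}\tau(z_x^{-1}g_x^{-1}z,z^{-1};f)\;v_{g_x^{-1}}\otimes f\otimes z_x\otimes p_{x^{-1}z}\#(z^{-1}\triangleright f)$$ for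 all $v\in V$, $z\in T_f$.
   Context: Standing setup: $\Bbbk$ is an algebraically closed field of characteristic $0$, $F$ a group (possibly infinite), $G$ a finite group, and $(F,G,\triangleleft,\triangleright)$ a matched pair: $\triangleright:G\times F\to F$ a left action of $G$ on the set $F$, $\triangleleft:G\times F\to G$ a right action of $F$ on the set $G$, with $g\triangleright(ff')=(g\triangleright f)((g\triangleleft f)\triangleright f')$ and $(gg')\triangleleft f=(g\triangleleft(g'\triangleright f))(g'\triangleleft f)$. Maps $\sigma:G\times F\times F\to\Bbbk^\times$, $(g,f,f')\mapsto\sigma(g;f,f')$, and $\tau:G\times G\times F\to\Bbbk^\times$, $(g,g',f)\mapsto\tau(g,g';f)$, satisfy: $\sigma(g;1_F,f)=\sigma(g;f,1_F)=\sigma(1_G;f,f')=1$; $\sigma(g\triangleleft f;f',f'')\sigma(g;f,f'f'')=\sigma(g;f,f')\sigma(g;ff',f'')$; $\tau(1_G,g;f)=\tau(g,1_G;f)=\tau(g,g';1_F)=1$; $\tau(g,g';g''\triangleright f)\tau(gg',g'';f)=\tau(g,g'g'';f)\tau(g',g'';f)$; and $\sigma(gg';f,f')\tau(g,g';ff')=\sigma(g;g'\triangleright f,(g'\triangleleft f)\triangleright f')\sigma(g';f,f')\tau(g,g';f)\tau(g\triangleleft(g'\triangleright f),g'\triangleleft f;f')$. $H$ has basis $\{p_g\#f\}$, product $(p_g\#f)(p_{g'}\#f')=\delta_{g\triangleleft f,g'}\sigma(g;f,f')p_g\#ff'$, coproduct $\Delta(p_g\#f)=\sum_{x\in G}\tau(gx^{-1},x;f)\,p_{gx^{-1}}\#(x\triangleright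 f)\otimes p_x\#f$, counit $\varepsilon(p_g\#f)=\delta_{g,1_G}$. Notation: $G_f=\{g\in G\mid g\triangleright f=f\}$; $T_f$ is a complete set of right coset representatives of $G_f$ in $G$ (so $G=\bigsqcup_{z\in T_f}G_fz$) with $1_G\in T_f$. $\Bbbk^{G_f}_{\tau_f}$ is the coalgebra with basis $\{p_g\}_{g\in G_f}$, $\Delta(p_g)=\sum_{x\in G_f}\tau(gx^{-1},x;f)p_{gx^{-1}}\otimes p_x$, $\varepsilon(p_g)=\delta_{g,1_G}$. $H'_f=\Bbbk^{G_f}{}^\tau\#\Bbbk F$ is the coalgebra with basis $\{p_g\#f'\mid g\in G_f,f'\in F\}$, $\Delta(p_g\#f')=\sum_{x\in G_f}\tau(gx^{-1},x;f')p_{gx^{-1}}\#(x\triangleright f')\otimes p_x\#f'$, $\varepsilon(p_g\#f')=\delta_{g,1_G}$; the projection $\pi_f:H\to H'_f$ keeping the terms with $g\in G_f$ is a coalgebra epimorphism, making $H$ a left $H'_f$-comodule via $(\pi_f\otimes\mathrm{id})\Delta$. For a right $C$-comodule $(M,\rho_M)$ and left $C$-comodule $(N,\rho_N)$, $M\Box_CN=\ker(\rho_M\otimes\mathrm{id}-\mathrm{id}\otimes\rho_N)\subseteq M\otimes N$. *)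

theory Defs
  imports "HOL-Algebra.Coset" "HOL-Library.Function_Algebras"
          "HOL-Computational_Algebra.Polynomial"
begin

definition alg_closed :: "'k::field itself \<Rightarrow> bool" where
  "alg_closed _ \<longleftrightarrow> (\<forall>p :: 'k poly. degree p \<noteq> 0 \<longrightarrow> (\<exists>x. poly p x = 0))"

(* lt g f = g |> f  (left action of G on F),  rt g f = g <| f  (right action of F on G) *)
definition matched_pair ::
  "('g,'a) monoid_scheme \<Rightarrow> ('f,'b) monoid_scheme \<Rightarrow> ('g \<Rightarrow> 'f \<Rightarrow> 'f) \<Rightarrow> ('g \<Rightarrow> 'f \<Rightarrow> 'g) \<Rightarrow> bool" where
  "matched_pair G F lt rt \<longleftrightarrow> group G \<and> group F \<and> finite (carrier G) \<and>
     (\<forall>g\<in>carrier G. \<forall>f\<in>carrier F. lt g f \<in> carrier F \<and> rt g f \<in> carrier G) \<and>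
     (\<forall>f\<in>carrier F. lt \<one>\<^bsub>G\<^esub> f = f) \<and>
     (\<forall>g\<in>carrier G. \<forall>g'\<in>carrier G. \<forall>f\<in>carrier F. lt (g \<otimes>\<^bsub>G\<^esub> g') f = lt g (lt g' f)) \<and>
     (\<forall>g\<in>carrier G. rt g \<one>\<^bsub>F\<^esub> = g) \<and>
     (\<forall>g\<in>carrier G. \<forall>f\<in>carrier F. \<forall>f'\<in>carrier F. rt g (f \<otimes>\<^bsub>F\<^esub> f') = rt (rt g f) f') \<and>
     (\<forall>g\<in>carrier G. \<forall>f\<in>carrier F. \<forall>f'\<in>carrier F.
        lt g (f \<otimes>\<^bsub>F\<^esub> f') = lt g f \<otimes>\<^bsub>F\<^esub> lt (rt g f) f') \<and>
     (\<forall>g\<in>carrier G. \<forall>g'\<in>carrier G. \<forall>f\<in>carrier F.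
        rt (g \<otimes>\<^bsub>G\<^esub> g') f = rt g (lt g' f) \<otimes>\<^bsub>G\<^esub> rt g' f)"

definition cocycles ::
  "('g,'a) monoid_scheme \<Rightarrow> ('f,'b) monoid_scheme \<Rightarrow> ('g \<Rightarrow> 'f \<Rightarrow> 'f) \<Rightarrow> ('g \<Rightarrow> 'f \<Rightarrow> 'g)
   \<Rightarrow> ('g \<Rightarrow> 'f \<Rightarrow> 'f \<Rightarrow> 'k::field) \<Rightarrow> ('g \<Rightarrow> 'g \<Rightarrow> 'f \<Rightarrow> 'k) \<Rightarrow> bool" where
  "cocycles G F lt rt \<sigma> \<tau> \<longleftrightarrow>
     (\<forall>g\<in>carrier G. \<forall>f\<in>carrier F. \<forall>f'\<in>carrier F. \<sigma> g f f' \<noteq> 0) \<and>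
     (\<forall>g\<in>carrier G. \<forall>g'\<in>carrier G. \<forall>f\<in>carrier F. \<tau> g g' f \<noteq> 0) \<and>
     (\<forall>g\<in>carrier G. \<forall>f\<in>carrier F. \<sigma> g \<one>\<^bsub>F\<^esub> f = 1 \<and> \<sigma> g f \<one>\<^bsub>F\<^esub> = 1) \<and>
     (\<forall>f\<in>carrier F. \<forall>f'\<in>carrier F. \<sigma> \<one>\<^bsub>G\<^esub> f f' = 1) \<and>
     (\<forall>g\<in>carrier G. \<forall>f\<in>carrier F. \<forall>f'\<in>carrier F. \<forall>f''\<in>carrier F.
        \<sigma> (rt g f) f' f'' * \<sigma> g f (f' \<otimes>\<^bsub>F\<^esub> f'') = \<sigma> g f f' * \<sigma> g (f \<otimes>\<^bsub>F\<^esub> f') f'') \<and>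
     (\<forall>g\<in>carrier G. \<forall>f\<in>carrier F. \<tau> \<one>\<^bsub>G\<^esub> g f = 1 \<and> \<tau> g \<one>\<^bsub>G\<^esub> f = 1) \<and>
     (\<forall>g\<in>carrier G. \<forall>g'\<in>carrier G. \<tau> g g' \<one>\<^bsub>F\<^esub> = 1) \<and>
     (\<forall>g\<in>carrier G. \<forall>g'\<in>carrier G. \<forall>g''\<in>carrier G. \<forall>f\<in>carrier F.
        \<tau> g g' (lt g'' f) * \<tau> (g \<otimes>\<^bsub>G\<^esub> g') g'' f = \<tau> g (g' \<otimes>\<^bsub>G\<^esub> g'') f * \<tau> g' g'' f) \<and>
     (\<forall>g\<in>carrier G. \<forall>g'\<in>carrier G. \<forall>f\<in>carrier F. \<forall>f'\<in>carrier F.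
        \<sigma> (g \<otimes>\<^bsub>G\<^esub> g') f f' * \<tau> g g' (f \<otimes>\<^bsub>F\<^esub> f') =
        \<sigma> g (lt g' f) (lt (rt g' f) f') * \<sigma> g' f f' * \<tau> g g' f * \<tau> (rt g (lt g' f)) (rt g' f) f')"

text \<open>The free space with basis indexed by a set B is modelled by finitely supported functions
  'b => 'k supported in B; the basis vector indexed by b is pb b.  For a vector space M,
  M tensor (free space on B) is modelled by finitely supported functions 'b => M:
  the element m tensor p_b is mt m b.  The free space on B1 tensor the free space on B2 is
  the free space on B1 x B2.\<close>

definition fsupp :: "('b \<Rightarrow> 'a::zero) \<Rightarrow> 'b set" where
  "fsupp u = {x. u x \<noteq> 0}"

definition pb :: "'b \<Rightarrow> 'b \<Rightarrow> 'k::{zero,one}" where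
  "pb b = (\<lambda>y. if y = b then 1 else 0)"

definition mt :: "'m::zero \<Rightarrow> 'b \<Rightarrow> 'b \<Rightarrow> 'm" where
  "mt m b = (\<lambda>y. if y = b then m else 0)"

definition sc :: "'k::times \<Rightarrow> ('b \<Rightarrow> 'k) \<Rightarrow> 'b \<Rightarrow> 'k" where
  "sc c u = (\<lambda>y. c * u y)"

definition scf :: "('k \<Rightarrow> 'm \<Rightarrow> 'm) \<Rightarrow> 'k \<Rightarrow> ('b \<Rightarrow> 'm) \<Rightarrow> 'b \<Rightarrow> 'm" where
  "scf scale c u = (\<lambda>y. scale c (u y))"

definition tensor :: "('b \<Rightarrow> 'k::times) \<Rightarrow> ('c \<Rightarrow> 'k) \<Rightarrow> 'b \<times> 'c \<Rightarrow> 'k" where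
  "tensor u w = (\<lambda>(y1, y2). u y1 * w y2)"

definition tensor_lin ::
  "('b \<Rightarrow> 'c \<Rightarrow> 'k::comm_ring_1) \<Rightarrow> ('b \<Rightarrow> 'd \<Rightarrow> 'k) \<Rightarrow> ('b \<times> 'b \<Rightarrow> 'k) \<Rightarrow> 'c \<times> 'd \<Rightarrow> 'k" where
  "tensor_lin \<phi> \<psi> w = (\<Sum>p\<in>fsupp w. sc (w p) (tensor (\<phi> (fst p)) (\<psi> (snd p))))"

(* (phi tensor id) for a linear map phi between free spaces *)
definition tensor_map_left ::
  "(('b \<Rightarrow> 'k) \<Rightarrow> 'c \<Rightarrow> 'k) \<Rightarrow> ('b \<times> 'd \<Rightarrow> 'k) \<Rightarrow> 'c \<times> 'd \<Rightarrow> 'k" where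
  "tensor_map_left \<phi> w = (\<lambda>(y1, y2). \<phi> (\<lambda>y. w (y, y2)) y1)"

text \<open>A coalgebra with basis B is given by the coproducts D b (in the free space on B x B)
  and counits e b of its basis vectors.  A right comodule (M, rho) with M a subspace of a
  vector space: rho m = sum_b (rho m b) tensor p_b.\<close>

definition right_comodule ::
  "('k::field \<Rightarrow> 'm::ab_group_add \<Rightarrow> 'm) \<Rightarrow> 'm set \<Rightarrow> 'c set \<Rightarrow> ('c \<Rightarrow> 'c \<times> 'c \<Rightarrow> 'k) \<Rightarrow> ('c \<Rightarrow> 'k)
   \<Rightarrow> ('m \<Rightarrow> 'c \<Rightarrow> 'm) \<Rightarrow> bool" where
  "right_comodule scale M B D e \<rho> \<longleftrightarrow>
     module.subspace scale M \<and>
     (\<forall>x\<in>M. \<forall>y\<in>M. \<rho> (x + y) = (\<lambda>c. \<rho> x c + \<rho> y c)) \<and>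
     (\<forall>a. \<forall>x\<in>M. \<rho> (scale a x) = (\<lambda>c. scale a (\<rho> x c))) \<and>
     (\<forall>x\<in>M. finite (fsupp (\<rho> x)) \<and> fsupp (\<rho> x) \<subseteq> B \<and> (\<forall>c. \<rho> x c \<in> M)) \<and>
     (\<forall>x\<in>M. \<forall>a b. \<rho> (\<rho> x b) a = (\<Sum>c\<in>fsupp (\<rho> x). scale (D c (a, b)) (\<rho> x c))) \<and>
     (\<forall>x\<in>M. (\<Sum>c\<in>fsupp (\<rho> x). scale (e c) (\<rho> x c)) = x)"

text \<open>Cotensor product of a right C-comodule (M, rhoM) with the free space N on BN carrying a
  left C-comodule structure rhoN (given on basis vectors, with values in C tensor N):
  the kernel of rhoM tensor id - id tensor rhoN inside M tensor N.\<close>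

definition cotensor ::
  "('k::field \<Rightarrow> 'm::ab_group_add \<Rightarrow> 'm) \<Rightarrow> 'm set \<Rightarrow> ('m \<Rightarrow> 'c \<Rightarrow> 'm) \<Rightarrow> 'n set
   \<Rightarrow> ('n \<Rightarrow> 'c \<times> 'n \<Rightarrow> 'k) \<Rightarrow> ('n \<Rightarrow> 'm) set" where
  "cotensor scale M \<rho>M BN \<rho>N =
     {w. finite (fsupp w) \<and> fsupp w \<subseteq> BN \<and> (\<forall>n. w n \<in> M) \<and>
         (\<forall>c n'. \<rho>M (w n') c = (\<Sum>n\<in>fsupp w. scale (\<rho>N n (c, n')) (w n)))}"

(* id tensor Delta on M tensor H, values in (M tensor H) tensor H (indexed by the last factor) *)
definition id_tensor_Delta ::
  "('k \<Rightarrow> 'm::ab_group_add \<Rightarrow> 'm) \<Rightarrow> ('n \<Rightarrow> 'n \<times> 'n \<Rightarrow> 'k) \<Rightarrow> ('n \<Rightarrow> 'm) \<Rightarrow> 'n \<Rightarrow> 'n \<Rightarrow> 'm" where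
  "id_tensor_Delta scale D w = (\<lambda>h2 h1. \<Sum>h\<in>fsupp w. scale (D h (h1, h2)) (w h))"

definition stab :: "('g,'a) monoid_scheme \<Rightarrow> ('g \<Rightarrow> 'f \<Rightarrow> 'f) \<Rightarrow> 'f \<Rightarrow> 'g set" where
  "stab G lt f = {g \<in> carrier G. lt g f = f}"

(* Delta(p_g # f') in H *)
definition H_Delta ::
  "('g,'a) monoid_scheme \<Rightarrow> ('g \<Rightarrow> 'f \<Rightarrow> 'f) \<Rightarrow> ('g \<Rightarrow> 'g \<Rightarrow> 'f \<Rightarrow> 'k::field)
   \<Rightarrow> 'g \<times> 'f \<Rightarrow> ('g \<times> 'f) \<times> ('g \<times> 'f) \<Rightarrow> 'k" where
  "H_Delta G lt \<tau> b = (case b of (g, f') \<Rightarrow>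
     (\<Sum>x\<in>carrier G. sc (\<tau> (g \<otimes>\<^bsub>G\<^esub> inv\<^bsub>G\<^esub> x) x f')
        (tensor (pb (g \<otimes>\<^bsub>G\<^esub> inv\<^bsub>G\<^esub> x, lt x f')) (pb (x, f')))))"

definition H_eps :: "('g,'a) monoid_scheme \<Rightarrow> 'g \<times> 'f \<Rightarrow> 'k::field" where
  "H_eps G b = (if fst b = \<one>\<^bsub>G\<^esub> then 1 else 0)"

definition Hp_Delta ::
  "('g,'a) monoid_scheme \<Rightarrow> ('g \<Rightarrow> 'f \<Rightarrow> 'f) \<Rightarrow> ('g \<Rightarrow> 'g \<Rightarrow> 'f \<Rightarrow> 'k::field) \<Rightarrow> 'f
   \<Rightarrow> 'g \<times> 'f \<Rightarrow> ('g \<times> 'f) \<times> ('g \<times> 'f) \<Rightarrow> 'k" where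
  "Hp_Delta G lt \<tau> f b = (case b of (g, f') \<Rightarrow>
     (\<Sum>x\<in>stab G lt f. sc (\<tau> (g \<otimes>\<^bsub>G\<^esub> inv\<^bsub>G\<^esub> x) x f')
        (tensor (pb (g \<otimes>\<^bsub>G\<^esub> inv\<^bsub>G\<^esub> x, lt x f')) (pb (x, f')))))"

definition C_Delta ::
  "('g,'a) monoid_scheme \<Rightarrow> ('g \<Rightarrow> 'f \<Rightarrow> 'f) \<Rightarrow> ('g \<Rightarrow> 'g \<Rightarrow> 'f \<Rightarrow> 'k::field) \<Rightarrow> 'f
   \<Rightarrow> 'g \<Rightarrow> 'g \<times> 'g \<Rightarrow> 'k" where
  "C_Delta G lt \<tau> f g =
     (\<Sum>x\<in>stab G lt f. sc (\<tau> (g \<otimes>\<^bsub>G\<^esub> inv\<^bsub>G\<^esub> x) x f)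
        (tensor (pb (g \<otimes>\<^bsub>G\<^esub> inv\<^bsub>G\<^esub> x)) (pb x)))"

definition C_eps :: "('g,'a) monoid_scheme \<Rightarrow> 'g \<Rightarrow> 'k::field" where
  "C_eps G g = (if g = \<one>\<^bsub>G\<^esub> then 1 else 0)"

definition pi_f :: "'g set \<Rightarrow> ('g \<times> 'f \<Rightarrow> 'k::zero) \<Rightarrow> 'g \<times> 'f \<Rightarrow> 'k" where
  "pi_f Gf u = (\<lambda>(g, f'). if g \<in> Gf then u (g, f') else 0)"

definition H_left_coaction ::
  "('g,'a) monoid_scheme \<Rightarrow> ('g \<Rightarrow> 'f \<Rightarrow> 'f) \<Rightarrow> ('g \<Rightarrow> 'g \<Rightarrow> 'f \<Rightarrow> 'k::field) \<Rightarrow> 'f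
   \<Rightarrow> 'g \<times> 'f \<Rightarrow> ('g \<times> 'f) \<times> ('g \<times> 'f) \<Rightarrow> 'k" where
  "H_left_coaction G lt \<tau> f h = tensor_map_left (pi_f (stab G lt f)) (H_Delta G lt \<tau> h)"

text \<open>V tensor kF is modelled as finitely supported functions 'f => 'v; v tensor f is vf v f,
  and V tensor kf is the subspace of those supported in {f}.\<close>

definition vf :: "'v::zero \<Rightarrow> 'f \<Rightarrow> 'f \<Rightarrow> 'v" where
  "vf v f = mt v f"

definition Vf :: "'f \<Rightarrow> ('f \<Rightarrow> 'v::zero) set" where
  "Vf f = {w. \<forall>f'. f' \<noteq> f \<longrightarrow> w f' = 0}"

definition rho' ::
  "('g,'a) monoid_scheme \<Rightarrow> ('g \<Rightarrow> 'f \<Rightarrow> 'f) \<Rightarrow> 'f \<Rightarrow> ('v::ab_group_add \<Rightarrow> 'g \<Rightarrow> 'v)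
   \<Rightarrow> ('f \<Rightarrow> 'v) \<Rightarrow> 'g \<times> 'f \<Rightarrow> 'f \<Rightarrow> 'v" where
  "rho' G lt f \<rho> w = (\<Sum>g\<in>stab G lt f. mt (vf (\<rho> (w f) g) f) (g, f))"

definition vfz ::
  "('k::field \<Rightarrow> 'v::ab_group_add \<Rightarrow> 'v) \<Rightarrow> ('g,'a) monoid_scheme \<Rightarrow> ('g \<Rightarrow> 'f \<Rightarrow> 'f)
   \<Rightarrow> ('g \<Rightarrow> 'g \<Rightarrow> 'f \<Rightarrow> 'k) \<Rightarrow> 'f \<Rightarrow> ('v \<Rightarrow> 'g \<Rightarrow> 'v) \<Rightarrow> 'v \<Rightarrow> 'g \<Rightarrow> 'g \<times> 'f \<Rightarrow> 'f \<Rightarrow> 'v" where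
  "vfz scale G lt \<tau> f \<rho> v z =
     (\<Sum>g\<in>stab G lt f. scf (scf scale) (\<tau> (g \<otimes>\<^bsub>G\<^esub> z) (inv\<^bsub>G\<^esub> z) f)
        (mt (vf (\<rho> v g) f) (g \<otimes>\<^bsub>G\<^esub> z, lt (inv\<^bsub>G\<^esub> z) f)))"

end

theory Submission
  imports Defs
begin


lemma sum_apply_fun: "(sum u A) x = (\<Sum>a\<in>A. u a x)"
  by (induction A rule: infinite_finite_induct) auto

lemma vs_scf: assumes "vector_space s" shows "vector_space (scf s)"
proof -
  interpret vector_space s by fact
  show ?thesis
    by unfold_locales (auto simp: scf_def fun_eq_iff vector_space_assms)
qed

lemma vs_module: "vector_space s \<Longrightarrow> module s"
  by (simp add: vector_space_def module_def)

locale LL = G: group G + V: vector_space scale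
  for G :: "('g,'a) monoid_scheme" and scale :: "'k::field \<Rightarrow> 'v::ab_group_add \<Rightarrow> 'v" +
  fixes lt :: "'g \<Rightarrow> 'f \<Rightarrow> 'f" and \<tau> :: "'g \<Rightarrow> 'g \<Rightarrow> 'f \<Rightarrow> 'k" and f :: 'f and Fc :: "'f set"
    and T :: "'g set" and \<rho> :: "'v \<Rightarrow> 'g \<Rightarrow> 'v"
  assumes finG: "finite (carrier G)"
    and lt_cl: "\<And>g x. g \<in> carrier G \<Longrightarrow> x \<in> Fc \<Longrightarrow> lt g x \<in> Fc"
    and lt_one: "\<And>x. x \<in> Fc \<Longrightarrow> lt \<one>\<^bsub>G\<^esub> x = x"
    and lt_mult: "\<And>g g' x. g \<in> carrier G \<Longrightarrow> g' \<in> carrier G \<Longrightarrow> x \<in> Fc \<Longrightarrow> lt (g \<otimes>\<^bsub>G\<^esub> g') x = lt g (lt g' x)"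
    and tau_nz: "\<And>g g' x. g \<in> carrier G \<Longrightarrow> g' \<in> carrier G \<Longrightarrow> x \<in> Fc \<Longrightarrow> \<tau> g g' x \<noteq> 0"
    and tau_1l: "\<And>g x. g \<in> carrier G \<Longrightarrow> x \<in> Fc \<Longrightarrow> \<tau> \<one>\<^bsub>G\<^esub> g x = 1"
    and tau_1r: "\<And>g x. g \<in> carrier G \<Longrightarrow> x \<in> Fc \<Longrightarrow> \<tau> g \<one>\<^bsub>G\<^esub> x = 1"
    and tau_coc: "\<And>g g' g'' x. g \<in> carrier G \<Longrightarrow> g' \<in> carrier G \<Longrightarrow> g'' \<in> carrier G \<Longrightarrow> x \<in> Fc \<Longrightarrow>
        \<tau> g g' (lt g'' x) * \<tau> (g \<otimes>\<^bsub>G\<^esub> g') g'' x = \<tau> g (g' \<otimes>\<^bsub>G\<^esub> g'') x * \<tau> g' g'' x"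
    and fF: "f \<in> Fc"
    and TG: "T \<subseteq> carrier G" and oneT: "\<one>\<^bsub>G\<^esub> \<in> T"
    and Tuniq: "\<forall>x\<in>carrier G. \<exists>!z. z \<in> T \<and> x \<in> stab G lt f #>\<^bsub>G\<^esub> z"
    and rc: "right_comodule scale UNIV (stab G lt f) (C_Delta G lt \<tau> f) (C_eps G) \<rho>"
begin

abbreviation "S \<equiv> stab G lt f"

lemma S_sub: "S \<subseteq> carrier G" by (auto simp: stab_def)

lemma S_subgroup: "subgroup S G"
proof
  show "S \<subseteq> carrier G" by (rule S_sub)
  show "\<one>\<^bsub>G\<^esub> \<in> S" using fF by (auto simp: stab_def lt_one)
  fix x y assume "x \<in> S" "y \<in> S"
  then show "x \<otimes>\<^bsub>G\<^esub> y \<in> S" using fF by (auto simp: stab_def lt_mult)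
next
  fix x assume x: "x \<in> S"
  then have xG: "x \<in> carrier G" "lt x f = f" by (auto simp: stab_def)
  have "f = lt (inv\<^bsub>G\<^esub> x \<otimes>\<^bsub>G\<^esub> x) f" using xG fF lt_one by simp
  also have "\<dots> = lt (inv\<^bsub>G\<^esub> x) (lt x f)" using xG fF by (intro lt_mult) auto
  also have "\<dots> = lt (inv\<^bsub>G\<^esub> x) f" using xG by simp
  finally show "inv\<^bsub>G\<^esub> x \<in> S" using xG by (simp add: stab_def)
qed

lemma rho_add: "\<rho> (x + y) = (\<lambda>c. \<rho> x c + \<rho> y c)"
  using rc by (simp add: right_comodule_def)
lemma rho_scale: "\<rho> (scale a x) = (\<lambda>c. scale a (\<rho> x c))"
  using rc by (simp add: right_comodule_def)
lemma rho_zero: "\<rho> 0 = (\<lambda>c. 0)"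
  using rho_scale[of 0 0] by simp
lemma rho_fin: "finite (fsupp (\<rho> x))" and rho_supp: "fsupp (\<rho> x) \<subseteq> S"
  using rc by (auto simp: right_comodule_def)
lemma rho_out: "c \<notin> S \<Longrightarrow> \<rho> x c = 0"
  using rho_supp by (auto simp: fsupp_def)

lemma rho_counit: "\<rho> x \<one>\<^bsub>G\<^esub> = x"
proof -
  have "(\<Sum>c\<in>fsupp (\<rho> x). scale (C_eps G c) (\<rho> x c)) = x"
    using rc by (simp add: right_comodule_def)
  moreover have "(\<Sum>c\<in>fsupp (\<rho> x). scale (C_eps G c) (\<rho> x c)) = \<rho> x \<one>\<^bsub>G\<^esub>"
  proof (cases "\<one>\<^bsub>G\<^esub> \<in> fsupp (\<rho> x)")
    case True
    then show ?thesis using rho_fin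
      by (simp add: C_eps_def if_distrib[of "\<lambda>a. scale a _"] sum.delta' cong: if_cong)
  next
    case False
    then show ?thesis
      by (auto simp: C_eps_def fsupp_def intro!: sum.neutral)
  qed
  ultimately show ?thesis by simp
qed

lemma C_Delta_pt: "C_Delta G lt \<tau> f c (a, b) =
   (if b \<in> S \<and> a = c \<otimes>\<^bsub>G\<^esub> inv\<^bsub>G\<^esub> b then \<tau> a b f else 0)"
proof -
  have fin: "finite S" using finG S_sub finite_subset by blast
  have "C_Delta G lt \<tau> f c (a, b) = (\<Sum>x\<in>S. if x = b then (if a = c \<otimes>\<^bsub>G\<^esub> inv\<^bsub>G\<^esub> b then \<tau> a b f else 0) else 0)"
    unfolding C_Delta_def sum_apply_fun
    by (intro sum.cong) (auto simp: sc_def tensor_def pb_def)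
  also have "\<dots> = (if b \<in> S \<and> a = c \<otimes>\<^bsub>G\<^esub> inv\<^bsub>G\<^esub> b then \<tau> a b f else 0)"
    using fin by (simp add: sum.delta')
  finally show ?thesis .
qed

lemma rho_rho: "\<rho> (\<rho> x b) a = (if b \<in> S \<and> a \<in> carrier G then scale (\<tau> a b f) (\<rho> x (a \<otimes>\<^bsub>G\<^esub> b)) else 0)"
proof -
  have "\<rho> (\<rho> x b) a = (\<Sum>c\<in>fsupp (\<rho> x). scale (C_Delta G lt \<tau> f c (a, b)) (\<rho> x c))"
    using rc by (simp add: right_comodule_def)
  also have "\<dots> = (\<Sum>c\<in>fsupp (\<rho> x). if c = a \<otimes>\<^bsub>G\<^esub> b then (if b \<in> S \<and> a \<in> carrier G then scale (\<tau> a b f) (\<rho> x c) else 0) else 0)"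
  proof (intro sum.cong refl)
    fix c assume c: "c \<in> fsupp (\<rho> x)"
    then have cG: "c \<in> carrier G" using rho_supp S_sub by blast
    show "scale (C_Delta G lt \<tau> f c (a, b)) (\<rho> x c) = (if c = a \<otimes>\<^bsub>G\<^esub> b then (if b \<in> S \<and> a \<in> carrier G then scale (\<tau> a b f) (\<rho> x c) else 0) else 0)"
      unfolding C_Delta_pt using cG S_sub
      by (auto simp: G.m_assoc)
  qed
  also have "\<dots> = (if b \<in> S \<and> a \<in> carrier G then scale (\<tau> a b f) (\<rho> x (a \<otimes>\<^bsub>G\<^esub> b)) else 0)"
    using rho_fin by (auto simp: sum.delta' fsupp_def)
  finally show ?thesis .
qed


lemma finS: "finite S" using finG S_sub finite_subset by blast

lemma scf_zero[simp]: "scf scale c 0 = 0" by (simp add: scf_def fun_eq_iff)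
lemma scf_zero_left[simp]: "scf scale 0 u = 0" by (simp add: scf_def fun_eq_iff)
lemma scf_mt: "scf s c (mt X k) k' = (if k' = k then s c X else s c 0)"
  by (simp add: scf_def mt_def)

lemma H_Delta_pt: "H_Delta G lt \<tau> (g, f') ((a1, b1), (a2, b2)) =
   (if a2 \<in> carrier G \<and> b2 = f' \<and> a1 = g \<otimes>\<^bsub>G\<^esub> inv\<^bsub>G\<^esub> a2 \<and> b1 = lt a2 f' then \<tau> a1 a2 f' else 0)"
proof -
  have "H_Delta G lt \<tau> (g, f') ((a1, b1), (a2, b2)) = (\<Sum>x\<in>carrier G. if x = a2 then
     (if b2 = f' \<and> a1 = g \<otimes>\<^bsub>G\<^esub> inv\<^bsub>G\<^esub> a2 \<and> b1 = lt a2 f' then \<tau> a1 a2 f' else 0) else 0)"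
    unfolding H_Delta_def prod.case sum_apply_fun
    by (intro sum.cong) (auto simp: sc_def tensor_def pb_def)
  also have "\<dots> = (if a2 \<in> carrier G \<and> b2 = f' \<and> a1 = g \<otimes>\<^bsub>G\<^esub> inv\<^bsub>G\<^esub> a2 \<and> b1 = lt a2 f' then \<tau> a1 a2 f' else 0)"
    using finG by (simp add: sum.delta')
  finally show ?thesis .
qed


lemma Hp_Delta_pt: "Hp_Delta G lt \<tau> f (g, f') ((a1, b1), (a2, b2)) =
   (if a2 \<in> S \<and> b2 = f' \<and> a1 = g \<otimes>\<^bsub>G\<^esub> inv\<^bsub>G\<^esub> a2 \<and> b1 = lt a2 f' then \<tau> a1 a2 f' else 0)"
proof -
  have "Hp_Delta G lt \<tau> f (g, f') ((a1, b1), (a2, b2)) = (\<Sum>x\<in>S. if x = a2 then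
     (if b2 = f' \<and> a1 = g \<otimes>\<^bsub>G\<^esub> inv\<^bsub>G\<^esub> a2 \<and> b1 = lt a2 f' then \<tau> a1 a2 f' else 0) else 0)"
    unfolding Hp_Delta_def prod.case sum_apply_fun
    by (intro sum.cong) (auto simp: sc_def tensor_def pb_def)
  also have "\<dots> = (if a2 \<in> S \<and> b2 = f' \<and> a1 = g \<otimes>\<^bsub>G\<^esub> inv\<^bsub>G\<^esub> a2 \<and> b1 = lt a2 f' then \<tau> a1 a2 f' else 0)"
    using finS by (simp add: sum.delta')
  finally show ?thesis .
qed

lemma grp1: "g \<in> carrier G \<Longrightarrow> y \<in> carrier G \<Longrightarrow>
   (a = g \<otimes>\<^bsub>G\<^esub> inv\<^bsub>G\<^esub> y) \<longleftrightarrow> (a \<in> carrier G \<and> g = a \<otimes>\<^bsub>G\<^esub> y)"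
  by (metis G.inv_closed G.inv_solve_right G.m_closed)

definition Dt :: "('g \<times> 'f \<Rightarrow> 'f \<Rightarrow> 'v) \<Rightarrow> 'g \<times> 'f \<Rightarrow> 'g \<times> 'f \<Rightarrow> 'f \<Rightarrow> 'v" where
  "Dt w = (\<lambda>(y, f2) (a, b). if y \<in> carrier G \<and> a \<in> carrier G \<and> b = lt y f2
      then scf scale (\<tau> a y f2) (w (a \<otimes>\<^bsub>G\<^esub> y, f2)) else 0)"

lemma rt_pt:
  assumes fin: "finite (fsupp w)" and sup: "fsupp w \<subseteq> carrier G \<times> UNIV"
  shows "id_tensor_Delta (scf scale) (H_Delta G lt \<tau>) w = Dt w"
proof (rule ext, rule ext)
  fix h2 h1 :: "'g \<times> 'f"
  obtain y f2 where h2: "h2 = (y, f2)" by (cases h2)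
  obtain a b where h1: "h1 = (a, b)" by (cases h1)
  have "id_tensor_Delta (scf scale) (H_Delta G lt \<tau>) w h2 h1 =
     (\<Sum>h\<in>fsupp w. if h = (a \<otimes>\<^bsub>G\<^esub> y, f2) then
        (if y \<in> carrier G \<and> a \<in> carrier G \<and> b = lt y f2 then scf scale (\<tau> a y f2) (w h) else 0) else 0)"
    unfolding id_tensor_Delta_def h1 h2
  proof (intro sum.cong refl)
    fix h assume hs: "h \<in> fsupp w"
    obtain g f'' where h: "h = (g, f'')" by (cases h)
    have gG: "g \<in> carrier G" using hs sup h by auto
    show "scf scale (H_Delta G lt \<tau> h ((a, b), y, f2)) (w h) =
        (if h = (a \<otimes>\<^bsub>G\<^esub> y, f2) then
        (if y \<in> carrier G \<and> a \<in> carrier G \<and> b = lt y f2 then scf scale (\<tau> a y f2) (w h) else 0) else 0)"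
      unfolding h H_Delta_pt using grp1[OF gG] gG
      by (auto simp: scf_zero)
  qed
  also have "\<dots> = Dt w h2 h1"
    using fin by (auto simp: sum.delta' Dt_def h1 h2 fsupp_def scf_zero)
  finally show "id_tensor_Delta (scf scale) (H_Delta G lt \<tau>) w h2 h1 = Dt w h2 h1" .
qed

lemma R_pt: "rho' G lt f \<rho> w (a, b) = (if a \<in> S \<and> b = f then vf (\<rho> (w f) a) f else 0)"
proof -
  have "rho' G lt f \<rho> w (a, b) = (\<Sum>g\<in>S. if g = a then (if b = f then vf (\<rho> (w f) a) f else 0) else 0)"
    unfolding rho'_def sum_apply_fun[where x="(a,b)"] by (intro sum.cong) (auto simp: mt_def)
  also have "\<dots> = (if a \<in> S \<and> b = f then vf (\<rho> (w f) a) f else 0)"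
    using finS by (simp add: sum.delta')
  finally show ?thesis .
qed

lemma vfz_pt:
  assumes z: "z \<in> carrier G"
  shows "vfz scale G lt \<tau> f \<rho> v z (h, f') =
    (if h \<in> carrier G \<and> h \<otimes>\<^bsub>G\<^esub> inv\<^bsub>G\<^esub> z \<in> S \<and> f' = lt (inv\<^bsub>G\<^esub> z) f
     then scf scale (\<tau> h (inv\<^bsub>G\<^esub> z) f) (vf (\<rho> v (h \<otimes>\<^bsub>G\<^esub> inv\<^bsub>G\<^esub> z)) f) else 0)"
proof -
  have "vfz scale G lt \<tau> f \<rho> v z (h, f') = (\<Sum>g\<in>S. if g = h \<otimes>\<^bsub>G\<^esub> inv\<^bsub>G\<^esub> z then
     (if h \<in> carrier G \<and> f' = lt (inv\<^bsub>G\<^esub> z) f then scf scale (\<tau> h (inv\<^bsub>G\<^esub> z) f) (vf (\<rho> v (h \<otimes>\<^bsub>G\<^esub> inv\<^bsub>G\<^esub> z)) f) else 0) else 0)"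
    unfolding vfz_def sum_apply_fun[where x="(h,f')"]
  proof (intro sum.cong refl)
    fix g assume g: "g \<in> S"
    then have gG: "g \<in> carrier G" using S_sub by blast
    have e: "(h = g \<otimes>\<^bsub>G\<^esub> z) \<longleftrightarrow> (h \<in> carrier G \<and> g = h \<otimes>\<^bsub>G\<^esub> inv\<^bsub>G\<^esub> z)"
      using gG z by (metis G.inv_solve_right G.m_closed)
    show "scf (scf scale) (\<tau> (g \<otimes>\<^bsub>G\<^esub> z) (inv\<^bsub>G\<^esub> z) f) (mt (vf (\<rho> v g) f) (g \<otimes>\<^bsub>G\<^esub> z, lt (inv\<^bsub>G\<^esub> z) f)) (h, f') =
      (if g = h \<otimes>\<^bsub>G\<^esub> inv\<^bsub>G\<^esub> z then
     (if h \<in> carrier G \<and> f' = lt (inv\<^bsub>G\<^esub> z) f then scf scale (\<tau> h (inv\<^bsub>G\<^esub> z) f) (vf (\<rho> v (h \<otimes>\<^bsub>G\<^esub> inv\<^bsub>G\<^esub> z)) f) else 0) else 0)"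
      unfolding scf_mt using e by (auto simp: scf_zero)
  qed
  also have "\<dots> = (if h \<in> carrier G \<and> h \<otimes>\<^bsub>G\<^esub> inv\<^bsub>G\<^esub> z \<in> S \<and> f' = lt (inv\<^bsub>G\<^esub> z) f
     then scf scale (\<tau> h (inv\<^bsub>G\<^esub> z) f) (vf (\<rho> v (h \<otimes>\<^bsub>G\<^esub> inv\<^bsub>G\<^esub> z)) f) else 0)"
    using finS by (auto simp: sum.delta')
  finally show ?thesis .
qed

lemma HLC_pt: "H_left_coaction G lt \<tau> f n (c, n') = (if fst c \<in> S then H_Delta G lt \<tau> n (c, n') else 0)"
  by (cases c) (simp add: H_left_coaction_def tensor_map_left_def pi_f_def)


lemma sum_fsupp_sup:
  assumes "finite A" "fsupp u \<subseteq> A" "\<And>c. s c 0 = 0"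
  shows "(\<Sum>c\<in>fsupp u. s (k c) (u c)) = (\<Sum>c\<in>A. s (k c) (u c))"
  by (rule sum.mono_neutral_left) (use assms in \<open>auto simp: fsupp_def\<close>)

lemma vf_add: "vf ((p::'v) + q) f = vf p f + vf q f" by (rule ext) (simp add: vf_def mt_def)
lemma vf_app[simp]: "vf v f f = v" by (simp add: vf_def mt_def)

lemma S_mult_iff: "gb \<in> S \<Longrightarrow> ga \<in> carrier G \<Longrightarrow> (ga \<otimes>\<^bsub>G\<^esub> gb \<in> S \<longleftrightarrow> ga \<in> S)"
  using S_subgroup S_sub
  by (metis G.inv_solve_right G.m_closed subgroup.m_closed subgroup.m_inv_closed subsetD)
lemma S_mult_iff': "ga \<in> S \<Longrightarrow> gb \<in> carrier G \<Longrightarrow> (ga \<otimes>\<^bsub>G\<^esub> gb \<in> S \<longleftrightarrow> gb \<in> S)"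
  using S_subgroup S_sub
  by (metis G.inv_solve_left G.m_closed subgroup.m_closed subgroup.m_inv_closed subsetD)
lemma vf_scale: "scf scale a (vf v f) = vf (scale a v) f" by (simp add: vf_def mt_def fun_eq_iff scf_def)
lemma vf_zero[simp]: "vf 0 f = 0" by (simp add: vf_def mt_def fun_eq_iff)
lemma vf_eq0[simp]: "vf v f = 0 \<longleftrightarrow> v = 0" by (simp add: vf_def mt_def fun_eq_iff)
lemma vf_Vf: "u \<in> Vf f \<Longrightarrow> vf (u f) f = u" by (auto simp: vf_def mt_def fun_eq_iff Vf_def)
lemma vf_in: "vf v f \<in> Vf f" by (simp add: vf_def mt_def Vf_def)
lemma Vf_0: "0 \<in> Vf f" by (simp add: Vf_def)

abbreviation "R \<equiv> rho' G lt f \<rho>"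

lemma R_add: "R (x + y) = (\<lambda>c. R x c + R y c)"
proof (rule ext)
  fix c :: "'g \<times> 'f" obtain a b where c: "c = (a, b)" by (cases c)
  show "R (x + y) c = R x c + R y c"
    unfolding c R_pt by (simp add: rho_add vf_add)
qed

lemma R_scale: "R (scf scale a x) = (\<lambda>c. scf scale a (R x c))"
proof (rule ext)
  fix c :: "'g \<times> 'f" obtain a' b where c: "c = (a', b)" by (cases c)
  show "R (scf scale a x) c = scf scale a (R x c)"
    unfolding c R_pt by (auto simp: scf_def rho_scale vf_def mt_def)
qed

lemma R_supp: "fsupp (R x) \<subseteq> S \<times> {f}"
  by (auto simp: fsupp_def R_pt split: if_splits)

lemma R_fin: "finite (fsupp (R x))"
  using R_supp finS by (meson finite_SigmaI finite.emptyI finite_insert finite_subset)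

lemma R_in: "R x c \<in> Vf f"
  by (cases c) (simp add: R_pt vf_in Vf_0)

lemma vs2: "vector_space (scf scale)" by (rule vs_scf) (rule V.vector_space_axioms)

lemma P2: "right_comodule (scf scale) (Vf f) (S \<times> Fc) (Hp_Delta G lt \<tau> f) (H_eps G) R"
proof -
  interpret W: vector_space "scf scale" by (rule vs2)
  have sub: "W.subspace (Vf f)" by (auto simp: W.subspace_def Vf_def scf_def)
  have coass: "R (R x b) a = (\<Sum>c\<in>fsupp (R x). scf scale (Hp_Delta G lt \<tau> f c (a, b)) (R x c))"
    if x: "x \<in> Vf f" for x a b
  proof -
    obtain ga fa where a: "a = (ga, fa)" by (cases a)
    obtain gb fb where b: "b = (gb, fb)" by (cases b)
    have "(\<Sum>c\<in>fsupp (R x). scf scale (Hp_Delta G lt \<tau> f c (a, b)) (R x c))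
        = (\<Sum>c\<in>S \<times> {f}. scf scale (Hp_Delta G lt \<tau> f c (a, b)) (R x c))"
      by (rule sum_fsupp_sup) (use R_supp finS in auto)
    also have "\<dots> = (\<Sum>c\<in>S \<times> {f}. if c = (ga \<otimes>\<^bsub>G\<^esub> gb, f) then
        (if ga \<in> carrier G \<and> gb \<in> S \<and> fb = f \<and> fa = f then scf scale (\<tau> ga gb f) (R x c) else 0) else 0)"
    proof (intro sum.cong refl)
      fix c assume c: "c \<in> S \<times> {f}"
      then obtain gc where c': "c = (gc, f)" "gc \<in> S" by auto
      then have gcG: "gc \<in> carrier G" using S_sub by auto
      show "scf scale (Hp_Delta G lt \<tau> f c (a, b)) (R x c) = (if c = (ga \<otimes>\<^bsub>G\<^esub> gb, f) then
        (if ga \<in> carrier G \<and> gb \<in> S \<and> fb = f \<and> fa = f then scf scale (\<tau> ga gb f) (R x c) else 0) else 0)"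
        unfolding a b c' Hp_Delta_pt using grp1[OF gcG] S_sub
        by (auto simp: stab_def)
    qed
    also have "\<dots> = (if ga \<in> carrier G \<and> gb \<in> S \<and> fb = f \<and> fa = f then scf scale (\<tau> ga gb f) (R x (ga \<otimes>\<^bsub>G\<^esub> gb, f)) else 0)"
      using finS by (auto simp: sum.delta' R_pt)
    also have "\<dots> = R (R x b) a"
      unfolding a b R_pt using S_subgroup S_sub S_mult_iff
      by (auto simp: rho_rho rho_zero vf_scale)
    finally show ?thesis by simp
  qed
  have counit: "(\<Sum>c\<in>fsupp (R x). scf scale (H_eps G c) (R x c)) = x" if x: "x \<in> Vf f" for x
  proof -
    have "(\<Sum>c\<in>fsupp (R x). scf scale (H_eps G c) (R x c)) = (\<Sum>c\<in>S \<times> {f}. scf scale (H_eps G c) (R x c))"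
      by (rule sum_fsupp_sup) (use R_supp finS in auto)
    also have "\<dots> = (\<Sum>c\<in>S \<times> {f}. if c = (\<one>\<^bsub>G\<^esub>, f) then R x c else 0)"
      by (intro sum.cong refl) (auto simp: H_eps_def scf_def fun_eq_iff)
    also have "\<dots> = R x (\<one>\<^bsub>G\<^esub>, f)"
      using finS S_subgroup by (simp add: subgroup.one_closed)
    also have "\<dots> = x"
      using S_subgroup x by (simp add: R_pt subgroup.one_closed rho_counit vf_Vf)
    finally show ?thesis .
  qed
  have sup: "fsupp (R x) \<subseteq> S \<times> Fc" for x using R_supp[of x] fF by auto
  show ?thesis
    unfolding right_comodule_def
    using sub R_add R_scale R_fin sup R_in coass counit
    by auto
qed


lemma C_Delta_supp: "g \<in> S \<Longrightarrow> fsupp (C_Delta G lt \<tau> f g) \<subseteq> carrier G \<times> carrier G"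
  using S_sub by (auto simp: fsupp_def C_Delta_pt split: if_splits intro!: G.m_closed G.inv_closed)

lemma P1: "(\<forall>g\<in>S. fsupp (Hp_Delta G lt \<tau> f (g, f)) \<subseteq> (S \<times> {f}) \<times> (S \<times> {f}))
     \<and> bij_betw (\<lambda>g. (g, f)) S (S \<times> {f})
     \<and> (\<forall>g\<in>S.
          Hp_Delta G lt \<tau> f (g, f) = tensor_lin (\<lambda>a. pb (a, f)) (\<lambda>a. pb (a, f)) (C_Delta G lt \<tau> f g)
          \<and> H_eps G (g, f) = (C_eps G g :: 'k))"
proof (intro conjI ballI)
  fix g assume g: "g \<in> S"
  then have gG: "g \<in> carrier G" using S_sub by auto
  show "fsupp (Hp_Delta G lt \<tau> f (g, f)) \<subseteq> (S \<times> {f}) \<times> (S \<times> {f})"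
  proof
    fix p assume p: "p \<in> fsupp (Hp_Delta G lt \<tau> f (g, f))"
    obtain a1 b1 a2 b2 where pe: "p = ((a1, b1), (a2, b2))" by (metis prod.collapse)
    from p have "a2 \<in> S \<and> b2 = f \<and> a1 = g \<otimes>\<^bsub>G\<^esub> inv\<^bsub>G\<^esub> a2 \<and> b1 = lt a2 f"
      by (simp add: pe fsupp_def Hp_Delta_pt split: if_splits)
    moreover have "a2 \<in> S \<Longrightarrow> g \<otimes>\<^bsub>G\<^esub> inv\<^bsub>G\<^esub> a2 \<in> S"
      using g S_subgroup by (simp add: subgroup.m_closed subgroup.m_inv_closed)
    moreover have "a2 \<in> S \<Longrightarrow> lt a2 f = f" by (simp add: stab_def)
    ultimately show "p \<in> (S \<times> {f}) \<times> (S \<times> {f})"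
      unfolding pe by auto
  qed
  have fin: "finite (fsupp (C_Delta G lt \<tau> f g))"
    using C_Delta_supp[OF g] finG finite_subset by blast
  show "Hp_Delta G lt \<tau> f (g, f) = tensor_lin (\<lambda>a. pb (a, f)) (\<lambda>a. pb (a, f)) (C_Delta G lt \<tau> f g)"
  proof (rule ext)
    fix p :: "('g \<times> 'f) \<times> ('g \<times> 'f)"
    obtain a1 b1 a2 b2 where pe: "p = ((a1, b1), (a2, b2))" by (metis prod.collapse)
    have "tensor_lin (\<lambda>a. pb (a, f)) (\<lambda>a. pb (a, f)) (C_Delta G lt \<tau> f g) p
       = (\<Sum>q\<in>fsupp (C_Delta G lt \<tau> f g). if q = (a1, a2) then (if b1 = f \<and> b2 = f then C_Delta G lt \<tau> f g q else 0) else 0)"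
      unfolding tensor_lin_def sum_apply_fun pe
      by (intro sum.cong refl) (auto simp: sc_def tensor_def pb_def)
    also have "\<dots> = (if b1 = f \<and> b2 = f then C_Delta G lt \<tau> f g (a1, a2) else 0)"
      using fin by (auto simp: sum.delta' fsupp_def)
    also have "\<dots> = Hp_Delta G lt \<tau> f (g, f) p"
      unfolding pe Hp_Delta_pt C_Delta_pt by (auto simp: stab_def)
    finally show "Hp_Delta G lt \<tau> f (g, f) p = tensor_lin (\<lambda>a. pb (a, f)) (\<lambda>a. pb (a, f)) (C_Delta G lt \<tau> f g) p" ..
  qed
  show "H_eps G (g, f) = (C_eps G g :: 'k)" by (simp add: H_eps_def C_eps_def)
qed (auto simp: bij_betw_def inj_on_def)


sublocale W: vector_space "scf scale" by (rule vs2)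

abbreviation "Vt \<equiv> cotensor (scf scale) (Vf f) R (carrier G \<times> Fc) (H_left_coaction G lt \<tau> f)"
abbreviation "rt' \<equiv> id_tensor_Delta (scf scale) (H_Delta G lt \<tau>)"

lemma HLC_sum:
  assumes "finite (fsupp w)" "fsupp w \<subseteq> carrier G \<times> Fc"
  shows "(\<Sum>n\<in>fsupp w. scf scale (H_left_coaction G lt \<tau> f n (c, n')) (w n)) = (if fst c \<in> S then Dt w n' c else 0)"
proof (cases "fst c \<in> S")
  case True
  have "(\<Sum>n\<in>fsupp w. scf scale (H_left_coaction G lt \<tau> f n (c, n')) (w n)) = rt' w n' c"
    unfolding id_tensor_Delta_def by (intro sum.cong refl) (simp only: HLC_pt True if_True)
  also have "\<dots> = Dt w n' c"
  proof -
    have "fsupp w \<subseteq> carrier G \<times> UNIV" using assms(2) by auto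
    then show ?thesis using rt_pt[of w] assms(1) by simp
  qed
  finally show ?thesis using True by simp
next
  case False
  then show ?thesis by (simp add: HLC_pt)
qed

end

context LL begin

lemma Vt_iff: "w \<in> Vt \<longleftrightarrow> finite (fsupp w) \<and> fsupp w \<subseteq> carrier G \<times> Fc \<and> (\<forall>n. w n \<in> Vf f) \<and>
    (\<forall>n' c. R (w n') c = (if fst c \<in> S then Dt w n' c else 0))"
proof -
  have e: "(\<forall>c n'. R (w n') c = (\<Sum>n\<in>fsupp w. scf scale (H_left_coaction G lt \<tau> f n (c, n')) (w n)))
     \<longleftrightarrow> (\<forall>n' c. R (w n') c = (if fst c \<in> S then Dt w n' c else 0))"
    if "finite (fsupp w)" "fsupp w \<subseteq> carrier G \<times> Fc"
    by (simp only: HLC_sum[OF that]) blast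
  show ?thesis
  proof
    assume w: "w \<in> Vt"
    then have C: "finite (fsupp w) \<and> fsupp w \<subseteq> carrier G \<times> Fc \<and> (\<forall>n. w n \<in> Vf f) \<and>
      (\<forall>c n'. R (w n') c = (\<Sum>n\<in>fsupp w. scf scale (H_left_coaction G lt \<tau> f n (c, n')) (w n)))"
      unfolding cotensor_def mem_Collect_eq .
    note A = C[THEN conjunct1] C[THEN conjunct2, THEN conjunct1] C[THEN conjunct2, THEN conjunct2, THEN conjunct1]
       C[THEN conjunct2, THEN conjunct2, THEN conjunct2]
    show "finite (fsupp w) \<and> fsupp w \<subseteq> carrier G \<times> Fc \<and> (\<forall>n. w n \<in> Vf f) \<and>
    (\<forall>n' c. R (w n') c = (if fst c \<in> S then Dt w n' c else 0))"
      using A e[OF A(1,2)] by (intro conjI) simp_all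
  next
    assume B: "finite (fsupp w) \<and> fsupp w \<subseteq> carrier G \<times> Fc \<and> (\<forall>n. w n \<in> Vf f) \<and>
    (\<forall>n' c. R (w n') c = (if fst c \<in> S then Dt w n' c else 0))"
    then have A: "finite (fsupp w)" "fsupp w \<subseteq> carrier G \<times> Fc" by simp_all
    show "w \<in> Vt" unfolding cotensor_def mem_Collect_eq using B e[OF A] by (intro conjI) simp_all
  qed
qed

lemma Vt_D:
  assumes "w \<in> Vt"
  shows Vt_fin: "finite (fsupp w)" and Vt_sub: "fsupp w \<subseteq> carrier G \<times> Fc" and Vt_Vf: "w n \<in> Vf f"
    and Vt_cond: "R (w n') c = (if fst c \<in> S then Dt w n' c else 0)"
  using assms unfolding Vt_iff by blast+


lemma Vt_outF: "w \<in> Vt \<Longrightarrow> f2 \<notin> Fc \<Longrightarrow> w (g, f2) = 0"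
  using Vt_sub[of w] by (auto simp: fsupp_def)

lemma one_S: "\<one>\<^bsub>G\<^esub> \<in> S" using S_subgroup by (simp add: subgroup.one_closed)

lemma Vt_supp:
  assumes w: "w \<in> Vt" and nz: "w (y, f2) \<noteq> 0"
  shows "y \<in> carrier G \<and> f2 \<in> Fc \<and> lt y f2 = f"
proof -
  have yf: "y \<in> carrier G" "f2 \<in> Fc" using Vt_sub[OF w] nz by (auto simp: fsupp_def)
  have "R (w (y, f2)) (\<one>\<^bsub>G\<^esub>, f) = Dt w (y, f2) (\<one>\<^bsub>G\<^esub>, f)"
    using Vt_cond[OF w, of "(y, f2)" "(\<one>\<^bsub>G\<^esub>, f)"] one_S by simp
  moreover have "R (w (y, f2)) (\<one>\<^bsub>G\<^esub>, f) = w (y, f2)"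
    using one_S by (simp add: R_pt rho_counit vf_Vf[OF Vt_Vf[OF w]])
  ultimately have "w (y, f2) = Dt w (y, f2) (\<one>\<^bsub>G\<^esub>, f)" by simp
  moreover have "Dt w (y, f2) (\<one>\<^bsub>G\<^esub>, f) = 0" if "f \<noteq> lt y f2" using that by (simp add: Dt_def)
  ultimately have "f = lt y f2" using nz by metis
  then show ?thesis using yf by simp
qed

lemma Dt_zero: "Dt 0 n c = 0"
  by (cases n; cases c) (simp add: Dt_def)
lemma Dt_zero': "Dt (\<lambda>_. 0) n c = 0"
  by (cases n; cases c) (simp add: Dt_def)

lemma Dt_outF: "x \<in> Vt \<Longrightarrow> f2 \<notin> Fc \<Longrightarrow> Dt x (y, f2) c = 0"
  by (cases c) (simp add: Dt_def Vt_outF fun_eq_iff scf_def)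

lemma DtDt:
  assumes x: "x \<in> Vt"
  shows "Dt (Dt x (y2, f2)) (y1, f1) (p, q) = (if y1 \<in> carrier G \<and> y2 \<in> carrier G \<and> f1 = lt y2 f2
     then scf scale (\<tau> y1 y2 f2) (Dt x (y1 \<otimes>\<^bsub>G\<^esub> y2, f2) (p, q)) else 0)"
proof (cases "y1 \<in> carrier G \<and> y2 \<in> carrier G \<and> f1 = lt y2 f2 \<and> p \<in> carrier G")
  case False
  then show ?thesis by (auto simp: Dt_def)
next
  case True
  then have G: "y1 \<in> carrier G" "y2 \<in> carrier G" "p \<in> carrier G" and f1: "f1 = lt y2 f2" by auto
  show ?thesis
  proof (cases "f2 \<in> Fc")
    case False
    have "Dt x (y2, f2) = (\<lambda>_. 0)" using Dt_outF[OF x False] by auto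
    then show ?thesis using Dt_outF[OF x False] by (simp add: Dt_zero')
  next
    case True
    have lt2: "lt y1 f1 = lt (y1 \<otimes>\<^bsub>G\<^esub> y2) f2" using f1 G True by (simp add: lt_mult)
    have coc: "\<tau> p y1 (lt y2 f2) * \<tau> (p \<otimes>\<^bsub>G\<^esub> y1) y2 f2 = \<tau> p (y1 \<otimes>\<^bsub>G\<^esub> y2) f2 * \<tau> y1 y2 f2"
      using tau_coc G True by blast
    have "Dt (Dt x (y2, f2)) (y1, f1) (p, q) = (if q = lt (y1 \<otimes>\<^bsub>G\<^esub> y2) f2 then
       scf scale (\<tau> p y1 (lt y2 f2) * \<tau> (p \<otimes>\<^bsub>G\<^esub> y1) y2 f2) (x (p \<otimes>\<^bsub>G\<^esub> y1 \<otimes>\<^bsub>G\<^esub> y2, f2)) else 0)"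
      using G f1 lt2 by (simp add: Dt_def)
    also have "\<dots> = scf scale (\<tau> y1 y2 f2) (Dt x (y1 \<otimes>\<^bsub>G\<^esub> y2, f2) (p, q))"
      using G coc by (simp add: Dt_def G.m_assoc mult.commute)
    finally show ?thesis using G f1 by simp
  qed
qed


lemma zero_app[simp]: "(0::'x \<Rightarrow> 'y::zero) u = 0" by (simp add: zero_fun_def)
lemma scf_app: "scf s a x k = s a (x k)" by (simp add: scf_def)

lemma Dt_add: "Dt (x + y) n c = Dt x n c + Dt y n c"
  by (cases n; cases c) (simp add: Dt_def W.scale_right_distrib)

lemma Dt_scale: "Dt (scf (scf scale) a x) n c = scf scale a (Dt x n c)"
  by (cases n; cases c) (simp add: Dt_def scf_app W.scale_left_commute)

lemma R_zero: "R 0 c = 0"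
  by (cases c) (simp add: R_pt rho_zero)

lemma Vf_add: "(u::'f \<Rightarrow> 'v) \<in> Vf f \<Longrightarrow> v \<in> Vf f \<Longrightarrow> u + v \<in> Vf f" by (simp add: Vf_def)
lemma Vf_scale: "u \<in> Vf f \<Longrightarrow> scf scale a u \<in> Vf f" by (simp add: Vf_def scf_def)

lemma fsupp_add: "fsupp ((x::'g \<times> 'f \<Rightarrow> 'f \<Rightarrow> 'v) + y) \<subseteq> fsupp x \<union> fsupp y" by (auto simp: fsupp_def)
lemma fsupp_scale: "fsupp (scf (scf scale) a x) \<subseteq> fsupp x" by (auto simp: fsupp_def scf_app)

lemma Vt_zero: "0 \<in> Vt"
  unfolding Vt_iff by (simp add: fsupp_def Vf_0 R_zero Dt_zero)

lemma Vt_add: assumes x: "x \<in> Vt" and y: "y \<in> Vt" shows "x + y \<in> Vt"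
proof -
  have fin: "finite (fsupp (x + y))"
    by (rule finite_subset[OF fsupp_add]) (simp add: Vt_fin[OF x] Vt_fin[OF y])
  have sub: "fsupp (x + y) \<subseteq> carrier G \<times> Fc"
    by (rule order_trans[OF fsupp_add]) (simp add: Vt_sub[OF x] Vt_sub[OF y])
  have vf: "(x + y) n \<in> Vf f" for n using Vf_add Vt_Vf[OF x] Vt_Vf[OF y] by simp
  have cond: "R ((x + y) n') c = (if fst c \<in> S then Dt (x + y) n' c else 0)" for n' c
    using Vt_cond[OF x, of n' c] Vt_cond[OF y, of n' c] by (simp add: R_add Dt_add)
  show ?thesis unfolding Vt_iff by (intro conjI allI fin sub vf cond)
qed

lemma Vt_scale: assumes x: "x \<in> Vt" shows "scf (scf scale) a x \<in> Vt"
proof -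
  have fin: "finite (fsupp (scf (scf scale) a x))"
    by (rule finite_subset[OF fsupp_scale]) (simp add: Vt_fin[OF x])
  have sub: "fsupp (scf (scf scale) a x) \<subseteq> carrier G \<times> Fc"
    by (rule order_trans[OF fsupp_scale]) (simp add: Vt_sub[OF x])
  have vf: "scf (scf scale) a x n \<in> Vf f" for n using Vf_scale Vt_Vf[OF x] by (simp add: scf_app)
  have cond: "R (scf (scf scale) a x n') c = (if fst c \<in> S then Dt (scf (scf scale) a x) n' c else 0)" for n' c
    using Vt_cond[OF x, of n' c] by (simp add: R_scale Dt_scale scf_app)
  show ?thesis unfolding Vt_iff by (intro conjI allI fin sub vf cond)
qed

lemma rt_eq: "x \<in> Vt \<Longrightarrow> rt' x = Dt x"
  by (rule rt_pt) (use Vt_fin Vt_sub in blast)+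

lemma Dt_supp: assumes x: "x \<in> Vt" shows "fsupp (Dt x) \<subseteq> carrier G \<times> snd ` fsupp x"
proof
  fix n assume n: "n \<in> fsupp (Dt x)"
  obtain y f2 where ne: "n = (y, f2)" by (cases n)
  from n obtain c where c: "Dt x (y, f2) c \<noteq> 0" unfolding ne fsupp_def by (auto simp: fun_eq_iff)
  obtain a b where ce: "c = (a, b)" by (cases c)
  from c have "y \<in> carrier G" "x (a \<otimes>\<^bsub>G\<^esub> y, f2) \<noteq> 0" unfolding ce Dt_def by (auto split: if_splits)
  then show "n \<in> carrier G \<times> snd ` fsupp x" unfolding ne fsupp_def by force
qed

lemma Vt_snd: assumes "x \<in> Vt" shows "finite (snd ` fsupp x) \<and> snd ` fsupp x \<subseteq> Fc"
  using Vt_fin[OF assms] Vt_sub[OF assms] by auto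

lemma Dt_fin: "x \<in> Vt \<Longrightarrow> finite (fsupp (Dt x))"
  using Dt_supp Vt_snd finG by (meson finite_SigmaI finite_subset)

lemma Dt_Vf: "x \<in> Vt \<Longrightarrow> Dt x n c \<in> Vf f"
  by (cases n; cases c) (simp add: Dt_def Vf_0 Vf_scale Vt_Vf)

lemma Dt_in: assumes x: "x \<in> Vt" shows "Dt x (y2, f2) \<in> Vt"
proof -
  let ?u = "Dt x (y2, f2)"
  have s1: "fsupp ?u \<subseteq> (\<lambda>a. (a, lt y2 f2)) ` carrier G"
  proof
    fix n assume n: "n \<in> fsupp ?u"
    obtain y1 f1 where ne: "n = (y1, f1)" by (cases n)
    from n have "?u (y1, f1) \<noteq> 0" unfolding ne fsupp_def by auto
    then have c: "?u (y1, f1) \<noteq> 0" by simp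
    have "y1 \<in> carrier G \<and> f1 = lt y2 f2"
    proof (rule ccontr)
      assume "\<not> (y1 \<in> carrier G \<and> f1 = lt y2 f2)"
      then have "?u (y1, f1) = 0" by (auto simp: Dt_def)
      then show False using c by simp
    qed
    then show "n \<in> (\<lambda>a. (a, lt y2 f2)) ` carrier G" unfolding ne by blast
  qed
  have fin: "finite (fsupp ?u)" using s1 finG finite_subset by blast
  have sub: "fsupp ?u \<subseteq> carrier G \<times> Fc"
  proof (cases "f2 \<in> Fc \<and> y2 \<in> carrier G")
    case True
    then show ?thesis using s1 lt_cl by auto
  next
    case False
    then have "?u = 0"
    proof (cases "f2 \<in> Fc")
      case True
      then show ?thesis using False by (auto simp: Dt_def fun_eq_iff)
    next
      case False
      then show ?thesis using Dt_outF[OF x False] by (auto simp: fun_eq_iff)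
    qed
    then show ?thesis by (simp add: fsupp_def)
  qed
  have vf: "?u n \<in> Vf f" for n
    by (cases n) (auto simp: Dt_def Vf_0 Vf_scale Vt_Vf[OF x])
  have cond: "R (?u n') c = (if fst c \<in> S then Dt ?u n' c else 0)" for n' c
  proof -
    obtain y1 f1 where ne: "n' = (y1, f1)" by (cases n')
    obtain p q where ce: "c = (p, q)" by (cases c)
    show ?thesis
    proof (cases "y1 \<in> carrier G \<and> y2 \<in> carrier G \<and> f1 = lt y2 f2")
      case True
      have "?u n' = scf scale (\<tau> y1 y2 f2) (x (y1 \<otimes>\<^bsub>G\<^esub> y2, f2))"
        using True by (simp add: ne Dt_def)
      then have "R (?u n') c = scf scale (\<tau> y1 y2 f2) (R (x (y1 \<otimes>\<^bsub>G\<^esub> y2, f2)) c)"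
        by (simp add: R_scale)
      also have "\<dots> = scf scale (\<tau> y1 y2 f2) (if fst c \<in> S then Dt x (y1 \<otimes>\<^bsub>G\<^esub> y2, f2) c else 0)"
        by (simp only: Vt_cond[OF x])
      also have "\<dots> = (if fst c \<in> S then Dt ?u n' c else 0)"
        unfolding ne ce DtDt[OF x] using True by simp
      finally show ?thesis .
    next
      case False
      have "?u n' = 0" using False by (auto simp: ne Dt_def fun_eq_iff)
      then show ?thesis unfolding ne ce DtDt[OF x] using False by (auto simp: R_zero)
    qed
  qed
  show ?thesis unfolding Vt_iff by (intro conjI allI fin sub vf cond)
qed


lemma scf2_zero: "scf (scf scale) c 0 = 0" by (simp add: scf_def fun_eq_iff)
lemma scf2_zero_left[simp]: "scf (scf scale) 0 u = 0" by (simp add: scf_def fun_eq_iff)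

lemma H_Delta_pt2:
  assumes yG: "y \<in> carrier G"
  shows "H_Delta G lt \<tau> (y, f') ((y1, f1), (y2, f2)) = (if (y, f') = (y1 \<otimes>\<^bsub>G\<^esub> y2, f2) \<and> y1 \<in> carrier G \<and> y2 \<in> carrier G \<and> f1 = lt y2 f2 then \<tau> y1 y2 f2 else 0)"
proof (cases "y2 \<in> carrier G")
  case True
  have e: "(y1 = y \<otimes>\<^bsub>G\<^esub> inv\<^bsub>G\<^esub> y2) = (y1 \<in> carrier G \<and> y = y1 \<otimes>\<^bsub>G\<^esub> y2)" by (rule grp1[OF yG True])
  show ?thesis by (simp only: H_Delta_pt e) auto
next
  case False
  then show ?thesis by (simp add: H_Delta_pt)
qed

lemma rt_coass:
  assumes x: "x \<in> Vt"
  shows "rt' (rt' x b) a = (\<Sum>c\<in>fsupp (rt' x). scf (scf scale) (H_Delta G lt \<tau> c (a, b)) (rt' x c))"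
proof -
  obtain y2 f2 where b: "b = (y2, f2)" by (cases b)
  obtain y1 f1 where a: "a = (y1, f1)" by (cases a)
  let ?P = "carrier G \<times> snd ` fsupp x"
  have finP: "finite ?P" using finG Vt_snd[OF x] by simp
  have "(\<Sum>c\<in>fsupp (rt' x). scf (scf scale) (H_Delta G lt \<tau> c (a, b)) (rt' x c))
      = (\<Sum>c\<in>?P. scf (scf scale) (H_Delta G lt \<tau> c (a, b)) (Dt x c))"
    unfolding rt_eq[OF x] by (rule sum_fsupp_sup[where s="scf (scf scale)" and k="\<lambda>c. H_Delta G lt \<tau> c (a, b)" and u="Dt x", OF finP Dt_supp[OF x] scf2_zero])
  also have "\<dots> = (\<Sum>c\<in>?P. if c = (y1 \<otimes>\<^bsub>G\<^esub> y2, f2) then (if y1 \<in> carrier G \<and> y2 \<in> carrier G \<and> f1 = lt y2 f2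
        then scf (scf scale) (\<tau> y1 y2 f2) (Dt x c) else 0) else 0)"
  proof (intro sum.cong refl)
    fix c assume c: "c \<in> ?P"
    obtain y f' where ce: "c = (y, f')" by (cases c)
    have yG: "y \<in> carrier G" using c ce by auto
    show "scf (scf scale) (H_Delta G lt \<tau> c (a, b)) (Dt x c) = (if c = (y1 \<otimes>\<^bsub>G\<^esub> y2, f2) then (if y1 \<in> carrier G \<and> y2 \<in> carrier G \<and> f1 = lt y2 f2
        then scf (scf scale) (\<tau> y1 y2 f2) (Dt x c) else 0) else 0)"
      unfolding a b ce H_Delta_pt2[OF yG] by simp
  qed
  also have "\<dots> = (if y1 \<in> carrier G \<and> y2 \<in> carrier G \<and> f1 = lt y2 f2
        then scf (scf scale) (\<tau> y1 y2 f2) (Dt x (y1 \<otimes>\<^bsub>G\<^esub> y2, f2)) else 0)"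
  proof -
    have "(y1 \<otimes>\<^bsub>G\<^esub> y2, f2) \<notin> ?P \<Longrightarrow> Dt x (y1 \<otimes>\<^bsub>G\<^esub> y2, f2) = 0"
      using Dt_supp[OF x] by (auto simp: fsupp_def)
    then show ?thesis using finP by (auto simp: sum.delta' scf2_zero)
  qed
  also have "\<dots> = rt' (rt' x b) a"
  proof -
    have "rt' (rt' x b) a = Dt (Dt x (y2, f2)) (y1, f1)"
      unfolding b a rt_eq[OF x] rt_eq[OF Dt_in[OF x]] ..
    also have "\<dots> = (if y1 \<in> carrier G \<and> y2 \<in> carrier G \<and> f1 = lt y2 f2
        then scf (scf scale) (\<tau> y1 y2 f2) (Dt x (y1 \<otimes>\<^bsub>G\<^esub> y2, f2)) else 0)"
    proof (rule ext)
      fix n :: "'g \<times> 'f" obtain p q where n: "n = (p, q)" by (cases n)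
      show "Dt (Dt x (y2, f2)) (y1, f1) n = (if y1 \<in> carrier G \<and> y2 \<in> carrier G \<and> f1 = lt y2 f2
        then scf (scf scale) (\<tau> y1 y2 f2) (Dt x (y1 \<otimes>\<^bsub>G\<^esub> y2, f2)) else 0) n"
        unfolding n DtDt[OF x] by (simp add: scf_app)
    qed
    finally show ?thesis by simp
  qed
  finally show ?thesis by simp
qed

lemma rt_counit:
  assumes x: "x \<in> Vt"
  shows "(\<Sum>c\<in>fsupp (rt' x). scf (scf scale) (H_eps G c) (rt' x c)) = x"
proof -
  let ?P = "carrier G \<times> snd ` fsupp x"
  have finP: "finite ?P" using finG Vt_snd[OF x] by simp
  have "(\<Sum>c\<in>fsupp (rt' x). scf (scf scale) (H_eps G c) (rt' x c))
      = (\<Sum>c\<in>?P. scf (scf scale) (H_eps G c) (Dt x c))"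
    unfolding rt_eq[OF x] by (rule sum_fsupp_sup[where s="scf (scf scale)" and k="H_eps G" and u="Dt x", OF finP Dt_supp[OF x] scf2_zero])
  also have "\<dots> = x"
  proof (rule ext)
    fix n :: "'g \<times> 'f" obtain p q where n: "n = (p, q)" by (cases n)
    have "(\<Sum>c\<in>?P. scf (scf scale) (H_eps G c) (Dt x c)) n = (\<Sum>c\<in>?P. scf scale (H_eps G c) (Dt x c n))"
      by (simp add: sum_apply_fun scf_app)
    also have "\<dots> = (\<Sum>c\<in>?P. if c = (\<one>\<^bsub>G\<^esub>, q) then (if p \<in> carrier G then x (p, q) else 0) else 0)"
    proof (intro sum.cong refl)
      fix c assume c: "c \<in> ?P"
      obtain y f2 where ce: "c = (y, f2)" by (cases c)
      have f2: "f2 \<in> Fc" using c ce Vt_snd[OF x] by auto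
      show "scf scale (H_eps G c) (Dt x c n) = (if c = (\<one>\<^bsub>G\<^esub>, q) then (if p \<in> carrier G then x (p, q) else 0) else 0)"
        unfolding ce n using f2 by (auto simp: H_eps_def Dt_def lt_one tau_1r)
    qed
    also have "\<dots> = x n"
    proof -
      have "x (p, q) \<noteq> 0 \<Longrightarrow> p \<in> carrier G \<and> (\<one>\<^bsub>G\<^esub>, q) \<in> ?P"
        using Vt_sub[OF x] by (force simp: fsupp_def)
      then show ?thesis using finP n by (auto simp: sum.delta')
    qed
    finally show "(\<Sum>c\<in>?P. scf (scf scale) (H_eps G c) (Dt x c)) n = x n" .
  qed
  finally show ?thesis .
qed

lemma P3a: "right_comodule (scf (scf scale)) Vt (carrier G \<times> Fc) (H_Delta G lt \<tau>) (H_eps G) rt'"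
proof -
  have m: "module (scf (scf scale))" by (rule vs_module[OF vs_scf[OF vs2]])
  have sub: "module.subspace (scf (scf scale)) Vt"
    unfolding module.subspace_def[OF m] using Vt_zero Vt_add Vt_scale by blast
  have add: "rt' (x + y) = (\<lambda>c. rt' x c + rt' y c)" if "x \<in> Vt" "y \<in> Vt" for x y
    using that by (simp add: rt_eq Vt_add fun_eq_iff Dt_add)
  have scl: "rt' (scf (scf scale) a x) = (\<lambda>c. scf (scf scale) a (rt' x c))" if "x \<in> Vt" for a x
    using that by (simp add: rt_eq Vt_scale fun_eq_iff Dt_scale scf_app)
  have fin: "finite (fsupp (rt' x))" if "x \<in> Vt" for x using that by (simp add: rt_eq Dt_fin)
  have supp: "fsupp (rt' x) \<subseteq> carrier G \<times> Fc" if "x \<in> Vt" for x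
    using that Dt_supp[OF that] Vt_snd[OF that] by (auto simp: rt_eq)
  have inn: "rt' x c \<in> Vt" if "x \<in> Vt" for x c
    using that Dt_in[OF that] by (cases c) (simp add: rt_eq)
  show ?thesis unfolding right_comodule_def
    using sub add scl fin supp inn rt_coass rt_counit by simp
qed


abbreviation "Z v z \<equiv> vfz scale G lt \<tau> f \<rho> v z"

lemma rcos_iff: assumes z: "z \<in> carrier G"
  shows "h \<in> S #>\<^bsub>G\<^esub> z \<longleftrightarrow> h \<in> carrier G \<and> h \<otimes>\<^bsub>G\<^esub> inv\<^bsub>G\<^esub> z \<in> S"
proof
  assume "h \<in> S #>\<^bsub>G\<^esub> z"
  then obtain s where s: "s \<in> S" "h = s \<otimes>\<^bsub>G\<^esub> z" by (auto simp: r_coset_def)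
  then have sG: "s \<in> carrier G" using S_sub by auto
  then show "h \<in> carrier G \<and> h \<otimes>\<^bsub>G\<^esub> inv\<^bsub>G\<^esub> z \<in> S" using s z by (simp add: G.m_assoc)
next
  assume h: "h \<in> carrier G \<and> h \<otimes>\<^bsub>G\<^esub> inv\<^bsub>G\<^esub> z \<in> S"
  then have "h = (h \<otimes>\<^bsub>G\<^esub> inv\<^bsub>G\<^esub> z) \<otimes>\<^bsub>G\<^esub> z" using z by (simp add: G.m_assoc)
  then show "h \<in> S #>\<^bsub>G\<^esub> z" using h unfolding r_coset_def by blast
qed

lemma T_G: "z \<in> T \<Longrightarrow> z \<in> carrier G" using TG by auto

lemma T_ex: assumes h: "h \<in> carrier G" shows "\<exists>z\<in>T. h \<otimes>\<^bsub>G\<^esub> inv\<^bsub>G\<^esub> z \<in> S"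
proof -
  obtain z where "z \<in> T" "h \<in> S #>\<^bsub>G\<^esub> z" using Tuniq h by blast
  then show ?thesis using rcos_iff[OF T_G] by blast
qed

lemma T_un: assumes "z \<in> T" "z' \<in> T" "h \<otimes>\<^bsub>G\<^esub> inv\<^bsub>G\<^esub> z \<in> S" "h \<otimes>\<^bsub>G\<^esub> inv\<^bsub>G\<^esub> z' \<in> S" "h \<in> carrier G"
  shows "z = z'"
proof -
  have "h \<in> S #>\<^bsub>G\<^esub> z" "h \<in> S #>\<^bsub>G\<^esub> z'" using assms rcos_iff[OF T_G] by blast+
  then show ?thesis using Tuniq assms by blast
qed

lemma vfz_in: assumes z: "z \<in> carrier G" shows "Z v z \<in> Vt"
proof -
  let ?u = "Z v z"
  let ?f0 = "lt (inv\<^bsub>G\<^esub> z) f"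
  have izG: "inv\<^bsub>G\<^esub> z \<in> carrier G" using z by simp
  have s1: "fsupp ?u \<subseteq> (\<lambda>h. (h, ?f0)) ` carrier G"
  proof
    fix n assume n: "n \<in> fsupp ?u"
    obtain h f' where ne: "n = (h, f')" by (cases n)
    from n have "?u (h, f') \<noteq> 0" unfolding ne fsupp_def by auto
    then have "h \<in> carrier G \<and> f' = ?f0" unfolding vfz_pt[OF z] by (auto split: if_splits)
    then show "n \<in> (\<lambda>h. (h, ?f0)) ` carrier G" unfolding ne by blast
  qed
  have fin: "finite (fsupp ?u)" by (rule finite_subset[OF s1]) (simp add: finG)
  have f0F: "?f0 \<in> Fc" using lt_cl[OF izG fF] .
  have sub: "fsupp ?u \<subseteq> carrier G \<times> Fc" by (rule order_trans[OF s1]) (use f0F in auto)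
  have vf: "?u n \<in> Vf f" for n
    by (cases n) (simp add: vfz_pt[OF z] Vf_0 Vf_scale vf_in)
  have cond: "R (?u n') c = (if fst c \<in> S then Dt ?u n' c else 0)" for n' c
  proof -
    obtain y f2 where ne: "n' = (y, f2)" by (cases n')
    obtain a b where ce: "c = (a, b)" by (cases c)
    show ?thesis
    proof (cases "a \<in> S")
      case False
      then show ?thesis unfolding ce by (simp add: R_pt)
    next
      case aS: True
      then have aG: "a \<in> carrier G" using S_sub by auto
      show ?thesis
      proof (cases "y \<in> carrier G \<and> y \<otimes>\<^bsub>G\<^esub> inv\<^bsub>G\<^esub> z \<in> S \<and> f2 = ?f0")
        case True
        let ?g = "y \<otimes>\<^bsub>G\<^esub> inv\<^bsub>G\<^esub> z"
        have yG: "y \<in> carrier G" and gS: "?g \<in> S" and f2: "f2 = ?f0" using True by auto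
        have gG: "?g \<in> carrier G" using gS S_sub by auto
        have agS: "a \<otimes>\<^bsub>G\<^esub> ?g \<in> S" using S_mult_iff[OF gS aG] aS by simp
        have lt_y: "lt y f2 = f"
        proof -
          have "lt y f2 = lt ?g f" using f2 yG izG fF by (simp add: lt_mult)
          then show ?thesis using gS by (simp add: stab_def)
        qed
        have coc: "\<tau> a y ?f0 * \<tau> (a \<otimes>\<^bsub>G\<^esub> y) (inv\<^bsub>G\<^esub> z) f = \<tau> a ?g f * \<tau> y (inv\<^bsub>G\<^esub> z) f"
          using tau_coc[OF aG yG izG fF] .
        have u1: "?u (y, f2) = scf scale (\<tau> y (inv\<^bsub>G\<^esub> z) f) (vf (\<rho> v ?g) f)"
          using True by (simp add: vfz_pt[OF z])
        have u2: "?u (a \<otimes>\<^bsub>G\<^esub> y, f2) = scf scale (\<tau> (a \<otimes>\<^bsub>G\<^esub> y) (inv\<^bsub>G\<^esub> z) f) (vf (\<rho> v (a \<otimes>\<^bsub>G\<^esub> ?g)) f)"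
          using agS aG yG izG f2 by (simp add: vfz_pt[OF z] G.m_assoc)
        have "R (?u n') c = (if b = f then vf (scale (\<tau> y (inv\<^bsub>G\<^esub> z) f * \<tau> a ?g f) (\<rho> v (a \<otimes>\<^bsub>G\<^esub> ?g))) f else 0)"
          unfolding ne ce R_pt u1 using aS aG gS by (simp add: scf_app rho_scale rho_rho)
        also have "\<dots> = Dt ?u n' c"
          unfolding ne ce Dt_def using aG yG lt_y u2 coc f2 by (simp add: vf_scale mult.commute)
        finally show ?thesis using aS ce by simp
      next
        case False
        have u1: "?u (y, f2) = 0" using False by (auto simp: vfz_pt[OF z])
        have u2: "?u (a \<otimes>\<^bsub>G\<^esub> y, f2) = 0" if "y \<in> carrier G"
        proof -
          have "\<not> (a \<otimes>\<^bsub>G\<^esub> y \<otimes>\<^bsub>G\<^esub> inv\<^bsub>G\<^esub> z \<in> S \<and> f2 = ?f0)"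
            using False that S_mult_iff'[OF aS] aG izG by (auto simp: G.m_assoc)
          then show ?thesis by (auto simp: vfz_pt[OF z])
        qed
        show ?thesis unfolding ne ce using u1 u2 aS by (auto simp: R_zero Dt_def)
      qed
    qed
  qed
  show ?thesis unfolding Vt_iff by (intro conjI allI fin sub vf cond)
qed


lemma finT: "finite T" using finite_subset[OF TG finG] .

lemma vfz_add: assumes z: "z \<in> carrier G" shows "Z (v + w) z = Z v z + Z w z"
proof (rule ext)
  fix n :: "'g \<times> 'f" obtain h f' where n: "n = (h, f')" by (cases n)
  show "Z (v + w) z n = (Z v z + Z w z) n"
    unfolding n by (simp add: vfz_pt[OF z] rho_add vf_add W.scale_right_distrib)
qed

lemma vfz_scale: assumes z: "z \<in> carrier G" shows "Z (scale a v) z = scf (scf scale) a (Z v z)"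
proof (rule ext)
  fix n :: "'g \<times> 'f" obtain h f' where n: "n = (h, f')" by (cases n)
  show "Z (scale a v) z n = scf (scf scale) a (Z v z) n"
    unfolding n by (simp add: vfz_pt[OF z] rho_scale vf_scale[symmetric] W.scale_left_commute scf_app)
qed

lemma sumT_pick:
  assumes h: "h \<in> carrier G" and z0: "z0 \<in> T" and g: "h \<otimes>\<^bsub>G\<^esub> inv\<^bsub>G\<^esub> z0 \<in> S"
  shows "(\<Sum>z\<in>T. Z (vs z) z (h, f')) = Z (vs z0) z0 (h, f')"
proof -
  have "(\<Sum>z\<in>T. Z (vs z) z (h, f')) = (\<Sum>z\<in>T. if z = z0 then Z (vs z0) z0 (h, f') else 0)"
  proof (intro sum.cong refl)
    fix z assume z: "z \<in> T"
    show "Z (vs z) z (h, f') = (if z = z0 then Z (vs z0) z0 (h, f') else 0)"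
    proof (cases "z = z0")
      case False
      then have "h \<otimes>\<^bsub>G\<^esub> inv\<^bsub>G\<^esub> z \<notin> S" using T_un[OF z z0 _ g h] by blast
      then show ?thesis using False by (simp add: vfz_pt[OF T_G[OF z]])
    qed simp
  qed
  also have "\<dots> = Z (vs z0) z0 (h, f')" using finT z0 by simp
  finally show ?thesis .
qed

lemma sumT_out: "h \<notin> carrier G \<Longrightarrow> (\<Sum>z\<in>T. Z (vs z) z (h, f')) = 0"
  by (intro sum.neutral) (simp add: vfz_pt[OF T_G])

lemma vfz_self: assumes z0: "z0 \<in> carrier G"
  shows "Z v z0 (z0, lt (inv\<^bsub>G\<^esub> z0) f) = scf scale (\<tau> z0 (inv\<^bsub>G\<^esub> z0) f) (vf v f)"
  using z0 one_S by (simp add: vfz_pt[OF z0] rho_counit)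

lemma vfz_indep:
  assumes sum0: "(\<Sum>z\<in>T. Z (vs z) z) = 0" and z0: "z0 \<in> T"
  shows "vs z0 = 0"
proof -
  have z0G: "z0 \<in> carrier G" using T_G[OF z0] .
  have "(\<Sum>z\<in>T. Z (vs z) z) (z0, lt (inv\<^bsub>G\<^esub> z0) f) = 0" using sum0 by simp
  then have "(\<Sum>z\<in>T. Z (vs z) z (z0, lt (inv\<^bsub>G\<^esub> z0) f)) = 0" by (simp only: sum_apply_fun[where x="(z0, lt (inv\<^bsub>G\<^esub> z0) f)"])
  then have "Z (vs z0) z0 (z0, lt (inv\<^bsub>G\<^esub> z0) f) = 0"
    using sumT_pick[OF z0G z0, of vs] z0G one_S by simp
  then have "scf scale (\<tau> z0 (inv\<^bsub>G\<^esub> z0) f) (vf (vs z0) f) = 0" using vfz_self[OF z0G] by simp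
  moreover have "\<tau> z0 (inv\<^bsub>G\<^esub> z0) f \<noteq> 0" using tau_nz z0G fF by simp
  ultimately show ?thesis by (simp add: W.scale_eq_0_iff)
qed

lemma lt_inv_eq: "h \<in> carrier G \<Longrightarrow> x \<in> Fc \<Longrightarrow> lt h x = y \<Longrightarrow> x = lt (inv\<^bsub>G\<^esub> h) y"
  by (metis G.inv_closed G.l_inv lt_mult lt_one)

lemma vfz_span:
  assumes w: "w \<in> Vt"
  shows "w = (\<Sum>z\<in>T. Z (scale (inverse (\<tau> z (inv\<^bsub>G\<^esub> z) f)) (w (z, lt (inv\<^bsub>G\<^esub> z) f) f)) z)"
    (is "w = (\<Sum>z\<in>T. Z (?vs z) z)")
proof (rule ext)
  fix n :: "'g \<times> 'f" obtain h f' where n: "n = (h, f')" by (cases n)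
  show "w n = (\<Sum>z\<in>T. Z (?vs z) z) n"
  proof (cases "h \<in> carrier G")
    case False
    then have "w (h, f') = 0" using Vt_sub[OF w] by (auto simp: fsupp_def)
    then show ?thesis unfolding n sum_apply_fun[where x="(h, f')"] using sumT_out[OF False] by simp
  next
    case hG: True
    obtain z0 where z0: "z0 \<in> T" and gS: "h \<otimes>\<^bsub>G\<^esub> inv\<^bsub>G\<^esub> z0 \<in> S" using T_ex[OF hG] by blast
    let ?g = "h \<otimes>\<^bsub>G\<^esub> inv\<^bsub>G\<^esub> z0"
    let ?f0 = "lt (inv\<^bsub>G\<^esub> z0) f"
    have z0G: "z0 \<in> carrier G" using T_G[OF z0] .
    have izG: "inv\<^bsub>G\<^esub> z0 \<in> carrier G" using z0G by simp
    have gG: "?g \<in> carrier G" using gS S_sub by auto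
    have hg: "?g \<otimes>\<^bsub>G\<^esub> z0 = h" using hG z0G by (simp add: G.m_assoc)
    have f0F: "?f0 \<in> Fc" using lt_cl[OF izG fF] .
    have "(\<Sum>z\<in>T. Z (?vs z) z) n = Z (?vs z0) z0 (h, f')"
      unfolding n sum_apply_fun[where x="(h, f')"] using sumT_pick[OF hG z0 gS] by simp
    show ?thesis
    proof (cases "f' = ?f0")
      case False
      have "w (h, f') = 0"
      proof (rule ccontr)
        assume "w (h, f') \<noteq> 0"
        then have "f' \<in> Fc" "lt h f' = f" using Vt_supp[OF w] by auto
        then have "f' = lt (inv\<^bsub>G\<^esub> h) f" using lt_inv_eq hG by blast
        also have "inv\<^bsub>G\<^esub> h = inv\<^bsub>G\<^esub> z0 \<otimes>\<^bsub>G\<^esub> inv\<^bsub>G\<^esub> ?g"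
          using hg gG z0G by (metis G.inv_mult_group)
        finally have "f' = lt (inv\<^bsub>G\<^esub> z0) (lt (inv\<^bsub>G\<^esub> ?g) f)"
          using izG gG fF by (simp add: lt_mult)
        moreover have "inv\<^bsub>G\<^esub> ?g \<in> S" using gS S_subgroup by (simp add: subgroup.m_inv_closed)
        ultimately have "f' = ?f0" by (simp add: stab_def)
        then show False using False by simp
      qed
      moreover have "Z (?vs z0) z0 (h, f') = 0" using False by (simp add: vfz_pt[OF z0G])
      ultimately show ?thesis using \<open>(\<Sum>z\<in>T. Z (?vs z) z) n = Z (?vs z0) z0 (h, f')\<close> n by simp
    next
      case True
      have ltz: "lt z0 ?f0 = f" using z0G izG fF by (simp add: lt_mult[symmetric] lt_one)
      have rel: "vf (\<rho> (w (z0, ?f0) f) ?g) f = scf scale (\<tau> ?g z0 ?f0) (w (h, ?f0))"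
      proof -
        have "R (w (z0, ?f0)) (?g, f) = Dt w (z0, ?f0) (?g, f)" using Vt_cond[OF w, of "(z0, ?f0)" "(?g, f)"] gS by simp
        then show ?thesis using gS z0G gG ltz hg by (simp add: R_pt Dt_def)
      qed
      have coc: "\<tau> ?g z0 ?f0 * \<tau> h (inv\<^bsub>G\<^esub> z0) f = \<tau> z0 (inv\<^bsub>G\<^esub> z0) f"
        using tau_coc[OF gG z0G izG fF] hg z0G gG fF by (simp add: tau_1r)
      have nz: "\<tau> z0 (inv\<^bsub>G\<^esub> z0) f \<noteq> 0" using tau_nz z0G izG fF by simp
      have "Z (?vs z0) z0 (h, f') = scf scale (\<tau> h (inv\<^bsub>G\<^esub> z0) f * inverse (\<tau> z0 (inv\<^bsub>G\<^esub> z0) f))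
             (vf (\<rho> (w (z0, ?f0) f) ?g) f)"
        using True hG gS by (simp add: vfz_pt[OF z0G] rho_scale vf_scale[symmetric])
      also have "\<dots> = scf scale (\<tau> h (inv\<^bsub>G\<^esub> z0) f * inverse (\<tau> z0 (inv\<^bsub>G\<^esub> z0) f) * \<tau> ?g z0 ?f0) (w (h, ?f0))"
        unfolding rel by simp
      also have "\<tau> h (inv\<^bsub>G\<^esub> z0) f * inverse (\<tau> z0 (inv\<^bsub>G\<^esub> z0) f) * \<tau> ?g z0 ?f0 = 1"
        using coc nz by (simp add: field_simps)
      finally show ?thesis using \<open>(\<Sum>z\<in>T. Z (?vs z) z) n = Z (?vs z0) z0 (h, f')\<close> n True by simp
    qed
  qed
qed


lemma grp2: "x \<in> carrier G \<Longrightarrow> z \<in> carrier G \<Longrightarrow> (y = inv\<^bsub>G\<^esub> x \<otimes>\<^bsub>G\<^esub> z) \<longleftrightarrow> (y \<in> carrier G \<and> x = z \<otimes>\<^bsub>G\<^esub> inv\<^bsub>G\<^esub> y)"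
  by (metis G.inv_closed G.inv_inv G.inv_mult_group G.inv_solve_left G.m_closed)

lemma RHS_eval:
  assumes z: "z \<in> carrier G"
  shows "(\<Sum>x\<in>carrier G. scf (scf (scf scale)) (c x) (mt (M x) (inv\<^bsub>G\<^esub> x \<otimes>\<^bsub>G\<^esub> z, f0))) (y, f2) (a, b)
    = (if y \<in> carrier G \<and> f2 = f0 then scf scale (c (z \<otimes>\<^bsub>G\<^esub> inv\<^bsub>G\<^esub> y)) (M (z \<otimes>\<^bsub>G\<^esub> inv\<^bsub>G\<^esub> y) (a, b)) else 0)"
proof -
  have "(\<Sum>x\<in>carrier G. scf (scf (scf scale)) (c x) (mt (M x) (inv\<^bsub>G\<^esub> x \<otimes>\<^bsub>G\<^esub> z, f0))) (y, f2) (a, b)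
     = (\<Sum>x\<in>carrier G. scf (scf (scf scale)) (c x) (mt (M x) (inv\<^bsub>G\<^esub> x \<otimes>\<^bsub>G\<^esub> z, f0)) (y, f2) (a, b))"
    by (simp only: sum_apply_fun[where x="(y, f2)"] sum_apply_fun[where x="(a, b)"])
  also have "\<dots> = (\<Sum>x\<in>carrier G. if x = z \<otimes>\<^bsub>G\<^esub> inv\<^bsub>G\<^esub> y then
        (if y \<in> carrier G \<and> f2 = f0 then scf scale (c x) (M x (a, b)) else 0) else 0)"
  proof (intro sum.cong refl)
    fix x assume x: "x \<in> carrier G"
    show "scf (scf (scf scale)) (c x) (mt (M x) (inv\<^bsub>G\<^esub> x \<otimes>\<^bsub>G\<^esub> z, f0)) (y, f2) (a, b) = (if x = z \<otimes>\<^bsub>G\<^esub> inv\<^bsub>G\<^esub> y then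
        (if y \<in> carrier G \<and> f2 = f0 then scf scale (c x) (M x (a, b)) else 0) else 0)"
      using grp2[OF x z, of y] by (auto simp: scf_app mt_def)
  qed
  also have "\<dots> = (if y \<in> carrier G \<and> f2 = f0 then scf scale (c (z \<otimes>\<^bsub>G\<^esub> inv\<^bsub>G\<^esub> y)) (M (z \<otimes>\<^bsub>G\<^esub> inv\<^bsub>G\<^esub> y) (a, b)) else 0)"
    using finG z by (auto simp: sum.delta')
  finally show ?thesis .
qed


lemma P3g:
  assumes gxzx: "\<forall>x\<in>carrier G. gx x \<in> S \<and> zx x \<in> T \<and> x = gx x \<otimes>\<^bsub>G\<^esub> zx x" and zT: "z \<in> T"
  shows "rt' (Z v z) = (\<Sum>x\<in>carrier G.
                    scf (scf (scf scale))
                      (inverse (\<tau> (inv\<^bsub>G\<^esub> zx x) (inv\<^bsub>G\<^esub> gx x) f)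
                        * \<tau> (inv\<^bsub>G\<^esub> zx x \<otimes>\<^bsub>G\<^esub> inv\<^bsub>G\<^esub> gx x \<otimes>\<^bsub>G\<^esub> z) (inv\<^bsub>G\<^esub> z) f)
                      (mt (Z (\<rho> v (inv\<^bsub>G\<^esub> gx x)) (zx x))
                          (inv\<^bsub>G\<^esub> x \<otimes>\<^bsub>G\<^esub> z, lt (inv\<^bsub>G\<^esub> z) f)))"
    (is "_ = ?RHS")
proof (rule ext, rule ext)
  fix h2 h1 :: "'g \<times> 'f"
  obtain y f2 where h2: "h2 = (y, f2)" by (cases h2)
  obtain a b where h1: "h1 = (a, b)" by (cases h1)
  have z: "z \<in> carrier G" using T_G[OF zT] .
  have izG: "inv\<^bsub>G\<^esub> z \<in> carrier G" using z by simp
  let ?f0 = "lt (inv\<^bsub>G\<^esub> z) f"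
  have f0F: "?f0 \<in> Fc" using lt_cl[OF izG fF] .
  have L: "rt' (Z v z) = Dt (Z v z)" by (rule rt_eq[OF vfz_in[OF z]])
  have R: "?RHS h2 h1 = (if y \<in> carrier G \<and> f2 = ?f0 then
      scf scale (inverse (\<tau> (inv\<^bsub>G\<^esub> zx (z \<otimes>\<^bsub>G\<^esub> inv\<^bsub>G\<^esub> y)) (inv\<^bsub>G\<^esub> gx (z \<otimes>\<^bsub>G\<^esub> inv\<^bsub>G\<^esub> y)) f)
                        * \<tau> (inv\<^bsub>G\<^esub> zx (z \<otimes>\<^bsub>G\<^esub> inv\<^bsub>G\<^esub> y) \<otimes>\<^bsub>G\<^esub> inv\<^bsub>G\<^esub> gx (z \<otimes>\<^bsub>G\<^esub> inv\<^bsub>G\<^esub> y) \<otimes>\<^bsub>G\<^esub> z) (inv\<^bsub>G\<^esub> z) f)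
       (Z (\<rho> v (inv\<^bsub>G\<^esub> gx (z \<otimes>\<^bsub>G\<^esub> inv\<^bsub>G\<^esub> y))) (zx (z \<otimes>\<^bsub>G\<^esub> inv\<^bsub>G\<^esub> y)) (a, b)) else 0)"
    unfolding h2 h1 by (rule RHS_eval[OF z])
  show "rt' (Z v z) h2 h1 = ?RHS h2 h1"
  proof (cases "y \<in> carrier G \<and> f2 = ?f0")
    case False
    have "Dt (Z v z) (y, f2) (a, b) = 0"
      using False by (auto simp: Dt_def vfz_pt[OF z])
    then show ?thesis unfolding L R unfolding h2 h1 using False by auto
  next
    case True
    then have yG: "y \<in> carrier G" and f2: "f2 = ?f0" by auto
    define x0 where "x0 = z \<otimes>\<^bsub>G\<^esub> inv\<^bsub>G\<^esub> y"
    have x0G: "x0 \<in> carrier G" using z yG by (simp add: x0_def)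
    define g where "g = gx x0"
    define w where "w = zx x0"
    have gS: "g \<in> S" and wT: "w \<in> T" and x0gw: "x0 = g \<otimes>\<^bsub>G\<^esub> w" using gxzx x0G by (auto simp: g_def w_def)
    have gG: "g \<in> carrier G" using gS S_sub by auto
    have wG: "w \<in> carrier G" using T_G[OF wT] .
    have igS: "inv\<^bsub>G\<^esub> g \<in> S" using gS S_subgroup by (simp add: subgroup.m_inv_closed)
    have igG: "inv\<^bsub>G\<^esub> g \<in> carrier G" using gG by simp
    have iwG: "inv\<^bsub>G\<^esub> w \<in> carrier G" using wG by simp
    have ix0a: "inv\<^bsub>G\<^esub> x0 = y \<otimes>\<^bsub>G\<^esub> inv\<^bsub>G\<^esub> z" using z yG by (simp add: x0_def G.inv_mult_group)
    have ix0b: "inv\<^bsub>G\<^esub> x0 = inv\<^bsub>G\<^esub> w \<otimes>\<^bsub>G\<^esub> inv\<^bsub>G\<^esub> g" using gG wG x0gw by (simp add: G.inv_mult_group)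
    have q: "y \<otimes>\<^bsub>G\<^esub> inv\<^bsub>G\<^esub> z = inv\<^bsub>G\<^esub> w \<otimes>\<^bsub>G\<^esub> inv\<^bsub>G\<^esub> g" using ix0a ix0b by simp
    have yback: "inv\<^bsub>G\<^esub> w \<otimes>\<^bsub>G\<^esub> inv\<^bsub>G\<^esub> g \<otimes>\<^bsub>G\<^esub> z = y"
      using q[symmetric] yG z by (simp add: G.m_assoc)
    have ltf: "lt y ?f0 = lt (inv\<^bsub>G\<^esub> w) f"
    proof -
      have "lt y ?f0 = lt (y \<otimes>\<^bsub>G\<^esub> inv\<^bsub>G\<^esub> z) f" using yG izG fF by (simp add: lt_mult)
      also have "\<dots> = lt (inv\<^bsub>G\<^esub> w) (lt (inv\<^bsub>G\<^esub> g) f)" unfolding q using iwG igG fF by (simp add: lt_mult)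
      also have "\<dots> = lt (inv\<^bsub>G\<^esub> w) f" using igS by (simp add: stab_def)
      finally show ?thesis .
    qed
    show ?thesis
    proof (cases "a \<in> carrier G")
      case False
      then show ?thesis unfolding L R unfolding h2 h1 using True
        by (simp add: Dt_def vfz_pt[OF wG] x0_def[symmetric] w_def[symmetric])
    next
      case aG: True
      have ayz: "a \<otimes>\<^bsub>G\<^esub> y \<otimes>\<^bsub>G\<^esub> inv\<^bsub>G\<^esub> z = a \<otimes>\<^bsub>G\<^esub> inv\<^bsub>G\<^esub> w \<otimes>\<^bsub>G\<^esub> inv\<^bsub>G\<^esub> g"
        using aG yG izG iwG igG q by (simp add: G.m_assoc)
      have awG: "a \<otimes>\<^bsub>G\<^esub> inv\<^bsub>G\<^esub> w \<in> carrier G" using aG iwG by simp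
      have memS: "(a \<otimes>\<^bsub>G\<^esub> y \<otimes>\<^bsub>G\<^esub> inv\<^bsub>G\<^esub> z \<in> S) = (a \<otimes>\<^bsub>G\<^esub> inv\<^bsub>G\<^esub> w \<in> S)"
        unfolding ayz by (rule S_mult_iff[OF igS awG])
      have LHS: "Dt (Z v z) (y, f2) (a, b) = (if a \<otimes>\<^bsub>G\<^esub> inv\<^bsub>G\<^esub> w \<in> S \<and> b = lt (inv\<^bsub>G\<^esub> w) f then
          scf scale (\<tau> a y ?f0 * \<tau> (a \<otimes>\<^bsub>G\<^esub> y) (inv\<^bsub>G\<^esub> z) f) (vf (\<rho> v (a \<otimes>\<^bsub>G\<^esub> inv\<^bsub>G\<^esub> w \<otimes>\<^bsub>G\<^esub> inv\<^bsub>G\<^esub> g)) f) else 0)"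
        using aG yG f2 ltf memS ayz by (simp add: Dt_def vfz_pt[OF z])
      have RHS: "?RHS h2 h1 = (if a \<otimes>\<^bsub>G\<^esub> inv\<^bsub>G\<^esub> w \<in> S \<and> b = lt (inv\<^bsub>G\<^esub> w) f then
          scf scale (inverse (\<tau> (inv\<^bsub>G\<^esub> w) (inv\<^bsub>G\<^esub> g) f) * \<tau> y (inv\<^bsub>G\<^esub> z) f * (\<tau> a (inv\<^bsub>G\<^esub> w) f * \<tau> (a \<otimes>\<^bsub>G\<^esub> inv\<^bsub>G\<^esub> w) (inv\<^bsub>G\<^esub> g) f))
            (vf (\<rho> v (a \<otimes>\<^bsub>G\<^esub> inv\<^bsub>G\<^esub> w \<otimes>\<^bsub>G\<^esub> inv\<^bsub>G\<^esub> g)) f) else 0)"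
        unfolding R using True aG igS awG
        by (simp add: x0_def[symmetric] g_def[symmetric] w_def[symmetric] yback vfz_pt[OF wG] rho_rho vf_scale[symmetric] mult.assoc)
      have C1: "\<tau> a y ?f0 * \<tau> (a \<otimes>\<^bsub>G\<^esub> y) (inv\<^bsub>G\<^esub> z) f = \<tau> a (y \<otimes>\<^bsub>G\<^esub> inv\<^bsub>G\<^esub> z) f * \<tau> y (inv\<^bsub>G\<^esub> z) f"
        by (rule tau_coc[OF aG yG izG fF])
      have C2: "\<tau> a (inv\<^bsub>G\<^esub> w) f * \<tau> (a \<otimes>\<^bsub>G\<^esub> inv\<^bsub>G\<^esub> w) (inv\<^bsub>G\<^esub> g) f = \<tau> a (inv\<^bsub>G\<^esub> w \<otimes>\<^bsub>G\<^esub> inv\<^bsub>G\<^esub> g) f * \<tau> (inv\<^bsub>G\<^esub> w) (inv\<^bsub>G\<^esub> g) f"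
        using tau_coc[OF aG iwG igG fF] igS by (simp add: stab_def)
      have nz: "\<tau> (inv\<^bsub>G\<^esub> w) (inv\<^bsub>G\<^esub> g) f \<noteq> 0" using tau_nz iwG igG fF by simp
      have sc: "inverse (\<tau> (inv\<^bsub>G\<^esub> w) (inv\<^bsub>G\<^esub> g) f) * \<tau> y (inv\<^bsub>G\<^esub> z) f * (\<tau> a (inv\<^bsub>G\<^esub> w) f * \<tau> (a \<otimes>\<^bsub>G\<^esub> inv\<^bsub>G\<^esub> w) (inv\<^bsub>G\<^esub> g) f)
          = \<tau> a y ?f0 * \<tau> (a \<otimes>\<^bsub>G\<^esub> y) (inv\<^bsub>G\<^esub> z) f"
        unfolding C1 C2 q using nz by (simp add: field_simps)
      show ?thesis unfolding L h2 h1 LHS RHS[unfolded h2 h1] sc ..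
    qed
  qed
qed

end

theorem lemma4p2:
  fixes G :: "('g, 'a) monoid_scheme" and F :: "('f, 'b) monoid_scheme"
    and lt :: "'g \<Rightarrow> 'f \<Rightarrow> 'f" and rt :: "'g \<Rightarrow> 'f \<Rightarrow> 'g"
    and \<sigma> :: "'g \<Rightarrow> 'f \<Rightarrow> 'f \<Rightarrow> 'k::field_char_0" and \<tau> :: "'g \<Rightarrow> 'g \<Rightarrow> 'f \<Rightarrow> 'k"
    and f :: 'f and T :: "'g set"
    and scale :: "'k \<Rightarrow> 'v::ab_group_add \<Rightarrow> 'v" and \<rho> :: "'v \<Rightarrow> 'g \<Rightarrow> 'v"
  assumes "alg_closed TYPE('k)"
    and "matched_pair G F lt rt"
    and "cocycles G F lt rt \<sigma> \<tau>"
    and "f \<in> carrier F"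
    and "T \<subseteq> carrier G" and "\<one>\<^bsub>G\<^esub> \<in> T"
    and "\<forall>x\<in>carrier G. \<exists>!z. z \<in> T \<and> x \<in> stab G lt f #>\<^bsub>G\<^esub> z"
    and "vector_space scale"
    and "right_comodule scale UNIV (stab G lt f) (C_Delta G lt \<tau> f) (C_eps G) \<rho>"
  shows
    \<comment> \<open>(1) p_g |-> p_g # f is a coalgebra isomorphism onto the subcoalgebra span{p_g # f}\<close>
    "(\<forall>g\<in>stab G lt f. fsupp (Hp_Delta G lt \<tau> f (g, f))
         \<subseteq> (stab G lt f \<times> {f}) \<times> (stab G lt f \<times> {f}))
     \<and> bij_betw (\<lambda>g. (g, f)) (stab G lt f) (stab G lt f \<times> {f})
     \<and> (\<forall>g\<in>stab G lt f.
          Hp_Delta G lt \<tau> f (g, f) = tensor_lin (\<lambda>a. pb (a, f)) (\<lambda>a. pb (a, f)) (C_Delta G lt \<tau> f g)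
          \<and> H_eps G (g, f) = (C_eps G g :: 'k))
     \<comment> \<open>(2) V tensor kf is a right H'_f-comodule via rho'\<close>
     \<and> right_comodule (scf scale) (Vf f) (stab G lt f \<times> carrier F) (Hp_Delta G lt \<tau> f) (H_eps G)
         (rho' G lt f \<rho>)
     \<comment> \<open>(3) the cotensor product\<close>
     \<and> (let Vt = cotensor (scf scale) (Vf f) (rho' G lt f \<rho>) (carrier G \<times> carrier F)
                    (H_left_coaction G lt \<tau> f);
            rt' = id_tensor_Delta (scf scale) (H_Delta G lt \<tau>)
        in right_comodule (scf (scf scale)) Vt (carrier G \<times> carrier F) (H_Delta G lt \<tau>) (H_eps G) rt'
         \<and> (\<forall>z\<in>T. \<forall>v. vfz scale G lt \<tau> f \<rho> v z \<in> Vt)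
         \<and> (\<forall>z\<in>T. \<forall>v w. vfz scale G lt \<tau> f \<rho> (v + w) z
                         = vfz scale G lt \<tau> f \<rho> v z + vfz scale G lt \<tau> f \<rho> w z)
         \<and> (\<forall>z\<in>T. \<forall>a v. vfz scale G lt \<tau> f \<rho> (scale a v) z
                         = scf (scf scale) a (vfz scale G lt \<tau> f \<rho> v z))
         \<and> (\<forall>w\<in>Vt. \<exists>vs. w = (\<Sum>z\<in>T. vfz scale G lt \<tau> f \<rho> (vs z) z))
         \<and> (\<forall>vs. (\<Sum>z\<in>T. vfz scale G lt \<tau> f \<rho> (vs z) z) = 0 \<longrightarrow> (\<forall>z\<in>T. vs z = 0))
         \<and> (\<forall>gx zx. (\<forall>x\<in>carrier G. gx x \<in> stab G lt f \<and> zx x \<in> T \<and> x = gx x \<otimes>\<^bsub>G\<^esub> zx x) \<longrightarrow>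
              (\<forall>v. \<forall>z\<in>T. rt' (vfz scale G lt \<tau> f \<rho> v z) =
                 (\<Sum>x\<in>carrier G.
                    scf (scf (scf scale))
                      (inverse (\<tau> (inv\<^bsub>G\<^esub> zx x) (inv\<^bsub>G\<^esub> gx x) f)
                        * \<tau> (inv\<^bsub>G\<^esub> zx x \<otimes>\<^bsub>G\<^esub> inv\<^bsub>G\<^esub> gx x \<otimes>\<^bsub>G\<^esub> z) (inv\<^bsub>G\<^esub> z) f)
                      (mt (vfz scale G lt \<tau> f \<rho> (\<rho> v (inv\<^bsub>G\<^esub> gx x)) (zx x))
                          (inv\<^bsub>G\<^esub> x \<otimes>\<^bsub>G\<^esub> z, lt (inv\<^bsub>G\<^esub> z) f))))))"
proof -
  have mp: "matched_pair G F lt rt" and cc: "cocycles G F lt rt \<sigma> \<tau>" using assms(2,3) .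
  have grp: "group G" using mp by (simp add: matched_pair_def)
  have finG: "finite (carrier G)" using mp by (simp add: matched_pair_def)
  have ltcl: "\<And>g x. g \<in> carrier G \<Longrightarrow> x \<in> carrier F \<Longrightarrow> lt g x \<in> carrier F"
    using mp by (simp add: matched_pair_def)
  have lt1: "\<And>x. x \<in> carrier F \<Longrightarrow> lt \<one>\<^bsub>G\<^esub> x = x"
    using mp by (simp add: matched_pair_def)
  have ltm: "\<And>g g' x. g \<in> carrier G \<Longrightarrow> g' \<in> carrier G \<Longrightarrow> x \<in> carrier F \<Longrightarrow> lt (g \<otimes>\<^bsub>G\<^esub> g') x = lt g (lt g' x)"
    using mp by (simp add: matched_pair_def)
  have tnz: "\<And>g g' x. g \<in> carrier G \<Longrightarrow> g' \<in> carrier G \<Longrightarrow> x \<in> carrier F \<Longrightarrow> \<tau> g g' x \<noteq> 0"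
    using cc by (simp add: cocycles_def)
  have t1l: "\<And>g x. g \<in> carrier G \<Longrightarrow> x \<in> carrier F \<Longrightarrow> \<tau> \<one>\<^bsub>G\<^esub> g x = 1"
    using cc by (simp add: cocycles_def)
  have t1r: "\<And>g x. g \<in> carrier G \<Longrightarrow> x \<in> carrier F \<Longrightarrow> \<tau> g \<one>\<^bsub>G\<^esub> x = 1"
    using cc by (simp add: cocycles_def)
  have tcoc: "\<And>g g' g'' x. g \<in> carrier G \<Longrightarrow> g' \<in> carrier G \<Longrightarrow> g'' \<in> carrier G \<Longrightarrow> x \<in> carrier F \<Longrightarrow>
        \<tau> g g' (lt g'' x) * \<tau> (g \<otimes>\<^bsub>G\<^esub> g') g'' x = \<tau> g (g' \<otimes>\<^bsub>G\<^esub> g'') x * \<tau> g' g'' x"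
    using cc by (simp add: cocycles_def)
  interpret L: LL G scale lt \<tau> f "carrier F" T \<rho>
    by (rule LL.intro[OF grp assms(8) LL_axioms.intro]) (use finG ltcl lt1 ltm tnz t1l t1r tcoc assms(4-7,9) in auto)
  show ?thesis
    unfolding Let_def
  proof (intro conjI)
    show "\<forall>g\<in>stab G lt f. fsupp (Hp_Delta G lt \<tau> f (g, f)) \<subseteq> (stab G lt f \<times> {f}) \<times> (stab G lt f \<times> {f})"
      using L.P1 by blast
    show "bij_betw (\<lambda>g. (g, f)) (stab G lt f) (stab G lt f \<times> {f})"
      using L.P1 by blast
    show "\<forall>g\<in>stab G lt f.
          Hp_Delta G lt \<tau> f (g, f) = tensor_lin (\<lambda>a. pb (a, f)) (\<lambda>a. pb (a, f)) (C_Delta G lt \<tau> f g)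
          \<and> H_eps G (g, f) = (C_eps G g :: 'k)"
      using L.P1 by blast
    show "right_comodule (scf scale) (Vf f) (stab G lt f \<times> carrier F) (Hp_Delta G lt \<tau> f) (H_eps G)
         (rho' G lt f \<rho>)" by (rule L.P2)
    show "right_comodule (scf (scf scale)) L.Vt (carrier G \<times> carrier F) (H_Delta G lt \<tau>) (H_eps G) L.rt'"
      by (rule L.P3a)
    show "\<forall>z\<in>T. \<forall>v. vfz scale G lt \<tau> f \<rho> v z \<in> L.Vt"
      using L.vfz_in L.T_G by blast
    show "\<forall>z\<in>T. \<forall>v w. vfz scale G lt \<tau> f \<rho> (v + w) z
                         = vfz scale G lt \<tau> f \<rho> v z + vfz scale G lt \<tau> f \<rho> w z"
      using L.vfz_add L.T_G by blast
    show "\<forall>z\<in>T. \<forall>a v. vfz scale G lt \<tau> f \<rho> (scale a v) z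
                         = scf (scf scale) a (vfz scale G lt \<tau> f \<rho> v z)"
      using L.vfz_scale L.T_G by blast
    show "\<forall>w\<in>L.Vt. \<exists>vs. w = (\<Sum>z\<in>T. vfz scale G lt \<tau> f \<rho> (vs z) z)"
    proof
      fix w assume w: "w \<in> L.Vt"
      show "\<exists>vs. w = (\<Sum>z\<in>T. vfz scale G lt \<tau> f \<rho> (vs z) z)"
        by (rule exI[of _ "\<lambda>z. scale (inverse (\<tau> z (inv\<^bsub>G\<^esub> z) f)) (w (z, lt (inv\<^bsub>G\<^esub> z) f) f)"])
           (rule L.vfz_span[OF w])
    qed
    show "\<forall>vs. (\<Sum>z\<in>T. vfz scale G lt \<tau> f \<rho> (vs z) z) = 0 \<longrightarrow> (\<forall>z\<in>T. vs z = 0)"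
      using L.vfz_indep by blast
    show "\<forall>gx zx. (\<forall>x\<in>carrier G. gx x \<in> stab G lt f \<and> zx x \<in> T \<and> x = gx x \<otimes>\<^bsub>G\<^esub> zx x) \<longrightarrow>
              (\<forall>v. \<forall>z\<in>T. L.rt' (vfz scale G lt \<tau> f \<rho> v z) =
                 (\<Sum>x\<in>carrier G.
                    scf (scf (scf scale))
                      (inverse (\<tau> (inv\<^bsub>G\<^esub> zx x) (inv\<^bsub>G\<^esub> gx x) f)
                        * \<tau> (inv\<^bsub>G\<^esub> zx x \<otimes>\<^bsub>G\<^esub> inv\<^bsub>G\<^esub> gx x \<otimes>\<^bsub>G\<^esub> z) (inv\<^bsub>G\<^esub> z) f)
                      (mt (vfz scale G lt \<tau> f \<rho> (\<rho> v (inv\<^bsub>G\<^esub> gx x)) (zx x))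
                          (inv\<^bsub>G\<^esub> x \<otimes>\<^bsub>G\<^esub> z, lt (inv\<^bsub>G\<^esub> z) f))))"
      using L.P3g by blast
  qed
qed

end
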